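(* Let $\delta>0$. Algorithm 2 described in the context, run with tolerance $\delta$, converges to a $\delta$-optimal solution in a finite number of iterations; that is, after finitely many iterations its stopping criterion $\overline{\theta}^k-\underline{\theta}^k\le\delta$ is satisfied.
   Context: Setting. Let $\mathbf d\ge 2$ be an integer, $\mathcal M$ a finite set of states, $\Omega$ a finite set of scenarios with $\pi^\omega=1/|\Omega|$. Let $\pi^m_1\ge0$ with $\sum_m\pi^m_1=1$ and, for $d\ge2$, $\pi^{lm}_d\ge0$ with $\sum_m\pi^{lm}_d=1$ for each $l$. For $d=1,\dots,\mathbf d$: cost vector $c_d$, matrices $A_d,C_d$, a bilinear map $(x,b)\mapsto x^\top B_db$ into the right-hand-side space, and a set $\mathcal Y_d$, given by linear constraints (possibly linking scenarios), of decisions $y_d=(y^\omega_d)_{\omega\in\Omega}$; $\mathcal Y^\omega_d$ is the convex compact set of admissible components $y^\omega_d$. Data vectors $b^{m\omega}_1$, $b^{lm\omega}_d$ ($d\ge2$); write $b^{lm}_d=(b^{lm\omega}_d)_{\omega\in\Omega}$. Define $\mathcal V^m_{\mathbf d}(x,y_{\mathbf d-1},b^{lm}_{\mathbf d})=\min_{y_{\mathbf d}\in\mathcal Y_{\mathbf d}}\sum_\omega\pi^\omega c_{\mathbf d}^\top y^\omega_{\mathbf d}$ s.t. $A_{\mathbf d}y^\omega_{\mathbf d}\le x^\top B_{\mathbf d}b^{lm\omega}_{\mathbf d}+C_{\mathbf d}y_{\mathbf d-1}$ for all $\omega$; for $2\le d\le\mathbf d-1$: $\mathcal V^m_d(x,y_{d-1},b^{lm}_d)=\min_{y_d\in\mathcal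 Y_d}\sum_\omega\pi^\omega\big(c_d^\top y^\omega_d+\sum_n\pi^{mn}_{d+1}\mathcal V^n_{d+1}(x,y^\omega_d,b^{mn}_{d+1})\big)$ s.t. $A_dy^\omega_d\le x^\top B_db^{lm\omega}_d+C_dy_{d-1}$ for all $\omega$; $\mathcal V^m_1(x)=\min_{y_1\in\mathcal Y_1}\sum_\omega\pi^\omega\big(c_1^\top y^\omega_1+\sum_n\pi^{mn}_2\mathcal V^n_2(x,y^\omega_1,b^{mn}_2)\big)$ s.t. $A_1y^\omega_1\le x^\top B_1b^{m\omega}_1$; $g(x)=\sum_m\pi^m_1\mathcal V^m_1(x)$. Standing assumptions: relatively complete recourse (all problems feasible with finite value); constants $\mathrm M_y,\mathrm M_b>0$ bounding the 1-norm $\|\cdot\|$ of every subgradient of every $\mathcal V^m_d$ with respect to its $y$-argument, respectively its $b$-argument. Approximating problems (for fixed $x$). For $1\le d\le\mathbf d-1$ and $m\in\mathcal M$ (for $d=1$ the arguments $y_0,b$ are absent and the constraint is $A_1y^\omega_1\le x^\top B_1b^{m\omega}_1$), $\mathbf{LP}^m_d(x,y_{d-1},b^{lm}_d)$ carries, for each $n$, a finite collection of tuples $(\underline\theta_s,\underline\lambda_s,\underline\sigma_s,\underline\nu_s,x_s,y_s,b_s)$ and is: minimise $\sum_\omega\pi^\omega(c_d^\top y^\omega_d+\sum_n\pi^{mn}_{d+1}\underline\vartheta^{\omega n})$ over $y_d\in\mathcal Y_d$, $\underline\vartheta^{\omega n}$, s.t. $A_dy^\omega_d\le x^\top B_db^{lm\omega}_d+C_dy_{d-1}$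 and $\underline\vartheta^{\omega n}\ge\underline\theta_s+\underline\lambda_s^\top(x-x_s)+\underline\sigma_s^\top(y^\omega_d-y_s)+\underline\nu_s^\top(b^{mn}_{d+1}-b_s)$ for all $\omega,n,s$. $\mathbf{UP}^m_d(y_{d-1},b^{lm}_d)$ carries, for each $n$, a finite collection of $(\overline\theta_s,y_s,b_s)$ and is: minimise $\sum_\omega\pi^\omega(c_d^\top y^\omega_d+\sum_n\pi^{mn}_{d+1}\overline\vartheta^{\omega n})$ over $y_d\in\mathcal Y_d$, $\overline\vartheta^{\omega n},\gamma^{\omega n},\zeta^{\omega n}$, $\mu^{\omega n}_s\ge0$, s.t. the same constraints $A_dy^\omega_d\le\dots$, $\overline\vartheta^{\omega n}\ge\sum_s\mu^{\omega n}_s\overline\theta_s+\mathrm M_y\|\gamma^{\omega n}\|+\mathrm M_b\|\zeta^{\omega n}\|$, $\sum_s\mu^{\omega n}_sy_s=y^\omega_d+\gamma^{\omega n}$, $\sum_s\mu^{\omega n}_sb_s=b^{mn}_{d+1}+\zeta^{\omega n}$, $\sum_s\mu^{\omega n}_s=1$. Adding a third argument $\tilde y$ to $\mathbf{UP}$ means imposing $y_d=\tilde y$. For $d=\mathbf d$ both are the problem defining $\mathcal V^m_{\mathbf d}$. Algorithm 2 (tolerance $\delta$), from given finite cut collections: $k:=0$, $\underline\theta^m_1:=-\infty$, $\overline\theta^m_1:=+\infty$. Each iteration: $k:=k+1$. Forward pass: $m_1\in\arg\max\{\overline\theta^m_1-\underline\theta^m_1:\pi^m_1>0\}$; solve $\mathbf{LP}^{m_1}_1(x)$,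 obtaining optimal $\underline y_1$ and $\underline\vartheta^{\omega n}_2$; solve $\mathbf{UP}^{m_1}_1(\underline y_1)$ obtaining $\overline{\underline\vartheta}^{\omega n}_2$. Set $d:=1$, $\hat d:=\mathbf d$; repeat: $d:=d+1$; $(\omega_{d-1},m_d)\in\arg\max\{\overline{\underline\vartheta}^{\omega n}_d-\underline\vartheta^{\omega n}_d:\pi^{m_{d-1}n}_d>0\}$; if the maximum exceeds $\delta(\mathbf d-d+1)/(\mathbf d-1)$, solve $\mathbf{LP}^{m_d}_d(x,\underline y^{\omega_{d-1}}_{d-1},b^{m_{d-1}m_d}_d)$ getting optimal $\underline y_d$ and $\underline\vartheta^{\omega n}_{d+1}$, and $\mathbf{UP}^{m_d}_d(\underline y^{\omega_{d-1}}_{d-1},b^{m_{d-1}m_d}_d,\underline y_d)$ getting $\overline{\underline\vartheta}^{\omega n}_{d+1}$; else $\hat d:=d-1$; until $\hat d=d-1$ or $d=\mathbf d$. Backward pass: for $d=\hat d,\dots,2$ and each $m\in\mathcal M$: solve $\mathbf{LP}^m_d(x,\underline y^{\omega_{d-1}}_{d-1},b^{m_{d-1}m}_d)$, obtaining its optimal value $\underline\theta$ and subgradients $\underline\lambda,\underline\sigma,\underline\nu$ of its optimal value w.r.t. $x$, $y_{d-1}$, $b$; solve $\mathbf{UP}^m_d(\underline y^{\omega_{d-1}}_{d-1},b^{m_{d-1}m}_d)$, obtaining optimal value $\overline\theta$; for every $l\in\mathcal M$ add $(\underline\theta,\underline\lambda,\underline\sigma,\underline\nu,x,\underline y^{\omega_{d-1}}_{d-1},b^{m_{d-1}m}_d)$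 to the collection for next state $m$ of $\mathbf{LP}^l_{d-1}$ and $(\overline\theta,\underline y^{\omega_{d-1}}_{d-1},b^{m_{d-1}m}_d)$ to that of $\mathbf{UP}^l_{d-1}$. Then for each $m$ solve $\mathbf{LP}^m_1(x)$, $\mathbf{UP}^m_1$ to get $\underline\theta^m_1$, $\underline\lambda^m_1$ (subgradient w.r.t. $x$), $\overline\theta^m_1$; set $\underline\theta^k:=\sum_m\pi^m_1\underline\theta^m_1$, $\underline\lambda^k:=\sum_m\pi^m_1\underline\lambda^m_1$, $\overline\theta^k:=\sum_m\pi^m_1\overline\theta^m_1$; stop if $\overline\theta^k-\underline\theta^k\le\delta$. *)

theory Defs
  imports "HOL-Analysis.Analysis"
begin

text \<open>
Stages are 1..D (D = the paper's bold d). Scenarios form the finite type 'w, states the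
finite type 'm. Per-scenario decisions live in 'y, per-scenario data vectors in 'b, right-hand
sides in 'r (componentwise order w.r.t. Basis), the fixed parameter x in 'x.
A full stage decision y_d = (y_d^w)_w is an element of 'y^'w, a data vector
b_d^{lm} = (b_d^{lmw})_w an element of 'b^'w.
\<close>

record ('x, 'y, 'b, 'r, 'w, 'm) msp =
  Dn   :: nat
  cst  :: "nat \<Rightarrow> 'y"
  Am   :: "nat \<Rightarrow> 'y \<Rightarrow> 'r"
  Cm   :: "nat \<Rightarrow> 'y \<Rightarrow> 'r"
  Bm   :: "nat \<Rightarrow> 'x \<Rightarrow> 'b \<Rightarrow> 'r"
  Yset :: "nat \<Rightarrow> ('y, 'w) vec set"
  pi1  :: "'m \<Rightarrow> real"
  pid  :: "nat \<Rightarrow> 'm \<Rightarrow> 'm \<Rightarrow> real"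
  bst1 :: "'m \<Rightarrow> ('b, 'w) vec"
  bst  :: "nat \<Rightarrow> 'm \<Rightarrow> 'm \<Rightarrow> ('b, 'w) vec"
  My   :: real
  Mb   :: real

definition vle :: "'a::euclidean_space \<Rightarrow> 'a \<Rightarrow> bool" where
  "vle u v \<longleftrightarrow> (\<forall>i\<in>Basis. u \<bullet> i \<le> v \<bullet> i)"

definition l1norm :: "'a::euclidean_space \<Rightarrow> real" where
  "l1norm v = (\<Sum>i\<in>Basis. \<bar>v \<bullet> i\<bar>)"

definition pw :: "'w::finite itself \<Rightarrow> real" where
  "pw _ = 1 / real CARD('w)"

text \<open>Feasible set of the stage-d problem (for d = 1 use yp = 0, b = bst1 m).\<close>

definition feas ::
  "('x::euclidean_space, 'y::euclidean_space, 'b::euclidean_space, 'r::euclidean_space, 'w::finite, 'm) msp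
    \<Rightarrow> nat \<Rightarrow> 'x \<Rightarrow> 'y \<Rightarrow> ('b, 'w) vec \<Rightarrow> ('y, 'w) vec set" where
  "feas P d x yp b = {y \<in> Yset P d.
      \<forall>\<omega>. vle (Am P d (y $ \<omega>)) (Bm P d x (b $ \<omega>) + Cm P d yp)}"

text \<open>Vrec P k: value function of stage D - k.\<close>

primrec Vrec ::
  "('x::euclidean_space, 'y::euclidean_space, 'b::euclidean_space, 'r::euclidean_space, 'w::finite, 'm::finite) msp
    \<Rightarrow> nat \<Rightarrow> 'm \<Rightarrow> 'x \<Rightarrow> 'y \<Rightarrow> ('b, 'w) vec \<Rightarrow> ereal" where
  "Vrec P 0 m x yp b =
     Inf ((\<lambda>y. \<Sum>\<omega>\<in>UNIV. ereal (pw TYPE('w)) * ereal (cst P (Dn P) \<bullet> (y $ \<omega>)))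
          ` feas P (Dn P) x yp b)"
| "Vrec P (Suc k) m x yp b =
     (let d = Dn P - Suc k in
     Inf ((\<lambda>y. \<Sum>\<omega>\<in>UNIV. ereal (pw TYPE('w)) *
              (ereal (cst P d \<bullet> (y $ \<omega>)) +
               (\<Sum>n\<in>UNIV. ereal (pid P (d + 1) m n) *
                   Vrec P k n x (y $ \<omega>) (bst P (d + 1) m n))))
          ` feas P d x yp b))"

text \<open>V P d m x y b = the paper's V^m_d(x, y_{d-1}, b^{lm}_d), for 1 <= d <= D.
  V^m_1(x) is V P 1 m x 0 (bst1 P m).\<close>

definition V where
  "V P d m x yp b = Vrec P (Dn P - d) m x yp b"

definition V1 where
  "V1 P m x = V P 1 m x 0 (bst1 P m)"

type_synonym ('x, 'y, 'b, 'w) lcut = "real \<times> 'x \<times> 'y \<times> ('b, 'w) vec \<times> 'x \<times> 'y \<times> ('b, 'w) vec"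
type_synonym ('y, 'b, 'w) ucut = "ereal \<times> 'y \<times> ('b, 'w) vec"

text \<open>value of the cut-based lower model (maximum of the cuts; -infinity if there are none)\<close>

definition Lapprox :: "('x::euclidean_space, 'y::euclidean_space, 'b::euclidean_space, 'w::finite) lcut set
    \<Rightarrow> 'x \<Rightarrow> 'y \<Rightarrow> ('b, 'w) vec \<Rightarrow> ereal" where
  "Lapprox S x y b = Sup ((\<lambda>(th, la, si, nu, xs, ys, bs).
      ereal (th + la \<bullet> (x - xs) + si \<bullet> (y - ys) + nu \<bullet> (b - bs))) ` S)"

text \<open>value of the inner upper-bound problem of UP: min over convex weights mu,
  with gamma = sum mu_s y_s - y and zeta = sum mu_s b_s - b (+infinity if there are no points)\<close>

definition Uapprox :: "real \<Rightarrow> real \<Rightarrow> ('y::euclidean_space, 'b::euclidean_space, 'w::finite) ucut set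
    \<Rightarrow> 'y \<Rightarrow> ('b, 'w) vec \<Rightarrow> ereal" where
  "Uapprox my mb S y b = Inf {(\<Sum>s\<in>S. ereal (\<mu> s) * fst s)
        + ereal (my * l1norm ((\<Sum>s\<in>S. \<mu> s *\<^sub>R fst (snd s)) - y))
        + ereal (mb * l1norm ((\<Sum>s\<in>S. \<mu> s *\<^sub>R snd (snd s)) - b)) | \<mu>.
      (\<forall>s\<in>S. 0 \<le> \<mu> s) \<and> (\<Sum>s\<in>S. \<mu> s) = 1}"

text \<open>Objective (in y, with the epigraph variables at their optimal values) of LP^m_d,
  where Lc d m n is the collection of LP^m_d for next state n. For d = D this is the
  objective of the problem defining V^m_D.\<close>

definition LPobj where
  "LPobj P (Lc :: nat \<Rightarrow> 'm::finite \<Rightarrow> 'm \<Rightarrow> ('x::euclidean_space, 'y::euclidean_space, 'b::euclidean_space, 'w::finite) lcut set)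
      d m x (y :: ('y, 'w) vec) =
    (\<Sum>\<omega>\<in>UNIV. ereal (pw TYPE('w)) *
       (ereal (cst P d \<bullet> (y $ \<omega>)) +
        (if d = Dn P then 0 else
         \<Sum>n\<in>UNIV. ereal (pid P (d + 1) m n) *
            Lapprox (Lc d m n) x (y $ \<omega>) (bst P (d + 1) m n))))"

definition LPval where
  "LPval P Lc d m x yp b = Inf (LPobj P Lc d m x ` feas P d x yp b)"

definition LPopt where
  "LPopt P Lc d m x yp b y \<longleftrightarrow> y \<in> feas P d x yp b \<and> LPobj P Lc d m x y = LPval P Lc d m x yp b"

definition UPobj where
  "UPobj P (Uc :: nat \<Rightarrow> 'm::finite \<Rightarrow> 'm \<Rightarrow> ('y::euclidean_space, 'b::euclidean_space, 'w::finite) ucut set)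
      d m (y :: ('y, 'w) vec) =
    (\<Sum>\<omega>\<in>UNIV. ereal (pw TYPE('w)) *
       (ereal (cst P d \<bullet> (y $ \<omega>)) +
        (if d = Dn P then 0 else
         \<Sum>n\<in>UNIV. ereal (pid P (d + 1) m n) *
            Uapprox (My P) (Mb P) (Uc d m n) (y $ \<omega>) (bst P (d + 1) m n))))"

definition UPval where
  "UPval P Uc d m x yp b = Inf (UPobj P Uc d m ` feas P d x yp b)"

definition subgrad :: "('a::real_inner \<Rightarrow> ereal) \<Rightarrow> 'a \<Rightarrow> 'a \<Rightarrow> bool" where
  "subgrad f a g \<longleftrightarrow> (\<forall>z. f a + ereal (g \<bullet> (z - a)) \<le> f z)"

definition subgrad2 :: "('a::real_inner \<Rightarrow> 'c::real_inner \<Rightarrow> ereal) \<Rightarrow> 'a \<Rightarrow> 'c \<Rightarrow> 'a \<Rightarrow> 'c \<Rightarrow> bool" where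
  "subgrad2 f a c g h \<longleftrightarrow> (\<forall>z w. f a c + ereal (g \<bullet> (z - a) + h \<bullet> (w - c)) \<le> f z w)"

record ('x, 'y, 'b, 'w, 'm) astate =
  Lcol :: "nat \<Rightarrow> 'm \<Rightarrow> 'm \<Rightarrow> ('x, 'y, 'b, 'w) lcut set"
  Ucol :: "nat \<Rightarrow> 'm \<Rightarrow> 'm \<Rightarrow> ('y, 'b, 'w) ucut set"
  thlo :: "'m \<Rightarrow> ereal"
  thup :: "'m \<Rightarrow> ereal"

text \<open>gap at stage d (d >= 2) for scenario w and next state n, along the forward path
  (ms = chosen states, ys = chosen stage solutions)\<close>

definition fgap where
  "fgap P (s :: ('x::euclidean_space, 'y::euclidean_space, 'b::euclidean_space, 'w::finite, 'm::finite) astate)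
      x (ms :: nat \<Rightarrow> 'm) (ys :: nat \<Rightarrow> ('y, 'w) vec) d \<omega> n =
    Uapprox (My P) (Mb P) (Ucol s (d - 1) (ms (d - 1)) n) (ys (d - 1) $ \<omega>) (bst P d (ms (d - 1)) n)
    - Lapprox (Lcol s (d - 1) (ms (d - 1)) n) x (ys (d - 1) $ \<omega>) (bst P d (ms (d - 1)) n)"

definition thr :: "nat \<Rightarrow> real \<Rightarrow> nat \<Rightarrow> ereal" where
  "thr D \<delta> d = ereal (\<delta> * real (D - d + 1) / real (D - 1))"

text \<open>Forward pass: dh is the paper's hat d, ms d = m_d, ws d = omega_d, ys d = underline y_d.\<close>

definition forward where
  "forward P x \<delta> s dh ms ws ys \<longleftrightarrow>
     1 \<le> dh \<and> dh \<le> Dn P \<and>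
     0 < pi1 P (ms 1) \<and>
     (\<forall>m. 0 < pi1 P m \<longrightarrow> thup s m - thlo s m \<le> thup s (ms 1) - thlo s (ms 1)) \<and>
     LPopt P (Lcol s) 1 (ms 1) x 0 (bst1 P (ms 1)) (ys 1) \<and>
     (\<forall>d\<in>{2..dh}.
        0 < pid P d (ms (d - 1)) (ms d) \<and>
        (\<forall>\<omega> n. 0 < pid P d (ms (d - 1)) n \<longrightarrow>
            fgap P s x ms ys d \<omega> n \<le> fgap P s x ms ys d (ws (d - 1)) (ms d)) \<and>
        thr (Dn P) \<delta> d < fgap P s x ms ys d (ws (d - 1)) (ms d) \<and>
        LPopt P (Lcol s) d (ms d) x (ys (d - 1) $ ws (d - 1)) (bst P d (ms (d - 1)) (ms d)) (ys d)) \<and>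
     (dh < Dn P \<longrightarrow>
        (\<forall>\<omega> n. 0 < pid P (dh + 1) (ms dh) n \<longrightarrow>
            fgap P s x ms ys (dh + 1) \<omega> n \<le> thr (Dn P) \<delta> (dh + 1)))"

text \<open>One backward stage d: for each m the cuts obtained from LP^m_d / UP^m_d are added,
  for every l, to the collections of LP^l_{d-1} / UP^l_{d-1} for next state m.
  sg d m = (lambda, sigma, nu).\<close>

definition bstage where
  "bstage P x (ms :: nat \<Rightarrow> 'm::finite) (ws :: nat \<Rightarrow> 'w::finite) (ys :: nat \<Rightarrow> ('y::euclidean_space, 'w) vec)
      (sg :: nat \<Rightarrow> 'm \<Rightarrow> 'x::euclidean_space \<times> 'y \<times> ('b::euclidean_space, 'w) vec) d
      (LU :: (nat \<Rightarrow> 'm \<Rightarrow> 'm \<Rightarrow> ('x, 'y, 'b, 'w) lcut set) \<times> (nat \<Rightarrow> 'm \<Rightarrow> 'm \<Rightarrow> ('y, 'b, 'w) ucut set)) =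
    (let L = fst LU; U = snd LU; yp = ys (d - 1) $ ws (d - 1);
         bb = (\<lambda>m. bst P d (ms (d - 1)) m) in
     (L(d - 1 := (\<lambda>l m. L (d - 1) l m \<union>
          {(real_of_ereal (LPval P L d m x yp (bb m)), fst (sg d m), fst (snd (sg d m)),
            snd (snd (sg d m)), x, yp, bb m)})),
      U(d - 1 := (\<lambda>l m. U (d - 1) l m \<union> {(UPval P U d m x yp (bb m), yp, bb m)}))))"

text \<open>collections after processing j backward stages dh, dh-1, ..., dh-j+1\<close>

primrec bcols where
  "bcols P x dh ms ws ys sg LU0 0 = LU0"
| "bcols P x dh ms ws ys sg LU0 (Suc j) = bstage P x ms ws ys sg (dh - j) (bcols P x dh ms ws ys sg LU0 j)"

definition bvalid where
  "bvalid P x dh ms ws ys sg LU0 \<longleftrightarrow>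
    (\<forall>j. j + 2 \<le> dh \<longrightarrow>
       (let d = dh - j; L = fst (bcols P x dh ms ws ys sg LU0 j);
            yp = ys (d - 1) $ ws (d - 1) in
        \<forall>m. let bb = bst P d (ms (d - 1)) m in
          \<bar>LPval P L d m x yp bb\<bar> \<noteq> \<infinity> \<and>
          subgrad (\<lambda>x'. LPval P L d m x' yp bb) x (fst (sg d m)) \<and>
          subgrad2 (\<lambda>y' b'. LPval P L d m x y' b') yp bb (fst (snd (sg d m))) (snd (snd (sg d m)))))"

definition alg2_step where
  "alg2_step P x \<delta> s s' \<longleftrightarrow>
    (\<exists>dh ms ws ys sg.
       forward P x \<delta> s dh ms ws ys \<and>
       bvalid P x dh ms ws ys sg (Lcol s, Ucol s) \<and>
       (let LU = bcols P x dh ms ws ys sg (Lcol s, Ucol s) (dh - 1) in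
        Lcol s' = fst LU \<and> Ucol s' = snd LU \<and>
        (\<forall>m. thlo s' m = LPval P (fst LU) 1 m x 0 (bst1 P m)) \<and>
        (\<forall>m. thup s' m = UPval P (snd LU) 1 m x 0 (bst1 P m)) \<and>
        (\<forall>m. \<exists>la. subgrad (\<lambda>x'. LPval P (fst LU) 1 m x' 0 (bst1 P m)) x la)))"

definition theta_lo where
  "theta_lo P s = (\<Sum>m\<in>UNIV. ereal (pi1 P m) * thlo s m)"

definition theta_up where
  "theta_up P s = (\<Sum>m\<in>UNIV. ereal (pi1 P m) * thup s m)"

definition alg2_stops where
  "alg2_stops P \<delta> s \<longleftrightarrow> theta_up P s - theta_lo P s \<le> ereal \<delta>"

definition std_assms where
  "std_assms (P :: ('x::euclidean_space, 'y::euclidean_space, 'b::euclidean_space, 'r::euclidean_space, 'w::finite, 'm::finite) msp) x \<longleftrightarrow>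
     2 \<le> Dn P \<and>
     (\<forall>d\<in>{1..Dn P}. linear (Am P d) \<and> linear (Cm P d) \<and> bilinear (Bm P d) \<and>
         polyhedron (Yset P d) \<and> compact (Yset P d)) \<and>
     (\<forall>m. 0 \<le> pi1 P m) \<and> (\<Sum>m\<in>UNIV. pi1 P m) = 1 \<and>
     (\<forall>d\<in>{2..Dn P}. \<forall>l. (\<forall>m. 0 \<le> pid P d l m) \<and> (\<Sum>m\<in>UNIV. pid P d l m) = 1) \<and>
     \<comment> \<open>relatively complete recourse\<close>
     (\<forall>m. \<bar>V1 P m x\<bar> \<noteq> \<infinity>) \<and>
     (\<forall>d\<in>{2..Dn P}. \<forall>l m. \<forall>z\<in>Yset P (d - 1). \<forall>\<omega>.
         \<bar>V P d m x (z $ \<omega>) (bst P d l m)\<bar> \<noteq> \<infinity>) \<and>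
     \<comment> \<open>subgradient bounds\<close>
     0 < My P \<and> 0 < Mb P \<and>
     (\<forall>d\<in>{2..Dn P}. \<forall>m x' yp b g.
         subgrad (\<lambda>y'. V P d m x' y' b) yp g \<longrightarrow> l1norm g \<le> My P) \<and>
     (\<forall>d\<in>{2..Dn P}. \<forall>m x' yp b g.
         subgrad (\<lambda>b'. V P d m x' yp b') b g \<longrightarrow> l1norm g \<le> Mb P)"

end

theory Submission
  imports Defs
begin

definition cv :: "('x::euclidean_space, 'y::euclidean_space, 'b::euclidean_space, 'w::finite) lcut \<Rightarrow> 'x \<Rightarrow> 'y \<Rightarrow> ('b, 'w) vec \<Rightarrow> real" where
  "cv c x z b = (case c of (th, la, si, nu, xs, ys, bs) \<Rightarrow> th + la \<bullet> (x - xs) + si \<bullet> (z - ys) + nu \<bullet> (b - bs))"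

lemma Lapprox_cv: "Lapprox S x y b = Sup ((\<lambda>c. ereal (cv c x y b)) ` S)"
  unfolding Lapprox_def cv_def by (simp add: split_def)

lemma Lapprox_ge: "c \<in> S \<Longrightarrow> ereal (cv c x y b) \<le> Lapprox S x y b"
  unfolding Lapprox_cv by (rule Sup_upper) auto

lemma Lapprox_le: "(\<And>c. c \<in> S \<Longrightarrow> cv c x y b \<le> B) \<Longrightarrow> Lapprox S x y b \<le> ereal B"
  unfolding Lapprox_cv by (rule Sup_least) auto

lemma Lapprox_mono: "S \<subseteq> S' \<Longrightarrow> Lapprox S x y b \<le> Lapprox S' x y b"
  unfolding Lapprox_cv by (rule Sup_subset_mono) auto

lemma Lapprox_empty: "Lapprox {} x y b = - \<infinity>"
  unfolding Lapprox_cv by (simp add: bot_ereal_def)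

lemma Lapprox_fin: assumes "finite S" shows "Lapprox S x y b < \<infinity>"
proof (cases "S = {}")
  case True then show ?thesis by (simp add: Lapprox_empty)
next
  case False
  have "Lapprox S x y b \<in> (\<lambda>c. ereal (cv c x y b)) ` S"
    unfolding Lapprox_cv using assms False by (simp add: cSup_eq_Max)
  then show ?thesis by auto
qed

lemma l1norm_zero [simp]: "l1norm 0 = 0"
  by (simp add: l1norm_def)

lemma l1norm_le: "l1norm (v::'a::euclidean_space) \<le> real DIM('a) * norm v"
proof -
  have "l1norm v \<le> (\<Sum>i\<in>(Basis::'a set). norm v)"
    unfolding l1norm_def by (metis (no_types, lifting) Basis_le_norm sum_mono)
  then show ?thesis by simp
qed

lemma l1norm_nonneg: "0 \<le> l1norm v"
  unfolding l1norm_def by (simp add: sum_nonneg)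

lemma Uapprox_le:
  assumes "finite S" "(th, y0, b0) \<in> S"
  shows "Uapprox my mb S y b \<le> th + ereal (my * l1norm (y0 - y)) + ereal (mb * l1norm (b0 - b))"
proof -
  define c where "c = (th, y0, b0)"
  define \<mu> where "\<mu> = (\<lambda>s. if s = c then (1::real) else 0)"
  have s1: "(\<Sum>s\<in>S. ereal (\<mu> s) * fst s) = th"
  proof -
    have "(\<Sum>s\<in>S. ereal (\<mu> s) * fst s) = (\<Sum>s\<in>S. if s = c then fst s else 0)"
      by (intro sum.cong) (auto simp: \<mu>_def)
    also have "\<dots> = th" using assms by (simp add: c_def sum.delta')
    finally show ?thesis .
  qed
  have s2: "(\<Sum>s\<in>S. \<mu> s *\<^sub>R fst (snd s)) = y0"
  proof -
    have "(\<Sum>s\<in>S. \<mu> s *\<^sub>R fst (snd s)) = (\<Sum>s\<in>S. if s = c then fst (snd s) else 0)"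
      by (intro sum.cong) (auto simp: \<mu>_def)
    also have "\<dots> = y0" using assms by (simp add: c_def sum.delta')
    finally show ?thesis .
  qed
  have s3: "(\<Sum>s\<in>S. \<mu> s *\<^sub>R snd (snd s)) = b0"
  proof -
    have "(\<Sum>s\<in>S. \<mu> s *\<^sub>R snd (snd s)) = (\<Sum>s\<in>S. if s = c then snd (snd s) else 0)"
      by (intro sum.cong) (auto simp: \<mu>_def)
    also have "\<dots> = b0" using assms by (simp add: c_def sum.delta')
    finally show ?thesis .
  qed
  have s4: "(\<Sum>s\<in>S. \<mu> s) = 1"
  proof -
    have "(\<Sum>s\<in>S. \<mu> s) = (\<Sum>s\<in>S. if s = c then 1 else 0)"
      by (intro sum.cong) (auto simp: \<mu>_def)
    also have "\<dots> = 1" using assms by (simp add: c_def sum.delta')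
    finally show ?thesis .
  qed
  have "th + ereal (my * l1norm (y0 - y)) + ereal (mb * l1norm (b0 - b)) \<in>
     {(\<Sum>s\<in>S. ereal (\<mu> s) * fst s)
        + ereal (my * l1norm ((\<Sum>s\<in>S. \<mu> s *\<^sub>R fst (snd s)) - y))
        + ereal (mb * l1norm ((\<Sum>s\<in>S. \<mu> s *\<^sub>R snd (snd s)) - b)) | \<mu>.
      (\<forall>s\<in>S. 0 \<le> \<mu> s) \<and> (\<Sum>s\<in>S. \<mu> s) = 1}"
    using s1 s2 s3 s4 by (auto simp: \<mu>_def intro!: exI[of _ \<mu>])
  then show ?thesis unfolding Uapprox_def by (rule Inf_lower)
qed

lemma Uapprox_mono:
  assumes "finite S'" "S \<subseteq> S'"
  shows "Uapprox my mb S' y b \<le> Uapprox my mb S y b"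
  unfolding Uapprox_def
proof (rule Inf_mono)
  fix a assume "a \<in> {(\<Sum>s\<in>S. ereal (\<mu> s) * fst s)
        + ereal (my * l1norm ((\<Sum>s\<in>S. \<mu> s *\<^sub>R fst (snd s)) - y))
        + ereal (mb * l1norm ((\<Sum>s\<in>S. \<mu> s *\<^sub>R snd (snd s)) - b)) | \<mu>.
      (\<forall>s\<in>S. 0 \<le> \<mu> s) \<and> (\<Sum>s\<in>S. \<mu> s) = 1}"
  then obtain \<mu> where a: "a = (\<Sum>s\<in>S. ereal (\<mu> s) * fst s)
        + ereal (my * l1norm ((\<Sum>s\<in>S. \<mu> s *\<^sub>R fst (snd s)) - y))
        + ereal (mb * l1norm ((\<Sum>s\<in>S. \<mu> s *\<^sub>R snd (snd s)) - b))"
    and m: "\<forall>s\<in>S. 0 \<le> \<mu> s" "(\<Sum>s\<in>S. \<mu> s) = 1" by blast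
  define \<mu>' where "\<mu>' = (\<lambda>s. if s \<in> S then \<mu> s else 0)"
  have fS: "finite S" using assms finite_subset by blast
  have e1: "(\<Sum>s\<in>S'. ereal (\<mu>' s) * fst s) = (\<Sum>s\<in>S. ereal (\<mu> s) * fst s)"
    by (rule sum.mono_neutral_cong_right) (use assms in \<open>auto simp: \<mu>'_def\<close>)
  have e2: "(\<Sum>s\<in>S'. \<mu>' s *\<^sub>R fst (snd s)) = (\<Sum>s\<in>S. \<mu> s *\<^sub>R fst (snd s))"
    by (rule sum.mono_neutral_cong_right) (use assms in \<open>auto simp: \<mu>'_def\<close>)
  have e3: "(\<Sum>s\<in>S'. \<mu>' s *\<^sub>R snd (snd s)) = (\<Sum>s\<in>S. \<mu> s *\<^sub>R snd (snd s))"
    by (rule sum.mono_neutral_cong_right) (use assms in \<open>auto simp: \<mu>'_def\<close>)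
  have e4: "(\<Sum>s\<in>S'. \<mu>' s) = (\<Sum>s\<in>S. \<mu> s)"
    by (rule sum.mono_neutral_cong_right) (use assms in \<open>auto simp: \<mu>'_def\<close>)
  have "a \<in> {(\<Sum>s\<in>S'. ereal (\<mu> s) * fst s)
        + ereal (my * l1norm ((\<Sum>s\<in>S'. \<mu> s *\<^sub>R fst (snd s)) - y))
        + ereal (mb * l1norm ((\<Sum>s\<in>S'. \<mu> s *\<^sub>R snd (snd s)) - b)) | \<mu>.
      (\<forall>s\<in>S'. 0 \<le> \<mu> s) \<and> (\<Sum>s\<in>S'. \<mu> s) = 1}"
    using e1 e2 e3 e4 m a by (auto simp: \<mu>'_def intro!: exI[of _ \<mu>'])
  then show "\<exists>b'\<in>{(\<Sum>s\<in>S'. ereal (\<mu> s) * fst s)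
        + ereal (my * l1norm ((\<Sum>s\<in>S'. \<mu> s *\<^sub>R fst (snd s)) - y))
        + ereal (mb * l1norm ((\<Sum>s\<in>S'. \<mu> s *\<^sub>R snd (snd s)) - b)) | \<mu>.
      (\<forall>s\<in>S'. 0 \<le> \<mu> s) \<and> (\<Sum>s\<in>S'. \<mu> s) = 1}. b' \<le> a" by blast
qed

lemma sum_pw: "(\<Sum>\<omega>\<in>(UNIV::'w::finite set). pw TYPE('w)) = 1"
  by (simp add: pw_def)

lemma gap_obj:
  fixes P :: "('x::euclidean_space, 'y::euclidean_space, 'b::euclidean_space, 'r::euclidean_space, 'w::finite, 'm::finite) msp"
  assumes dD: "d < Dn P" and pnn: "\<forall>n. 0 \<le> pid P (d+1) m n" and ps: "(\<Sum>n\<in>UNIV. pid P (d+1) m n) = 1"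
  and fin: "\<forall>n. finite (Lc d m n)"
  and gap: "\<forall>\<omega> n. 0 < pid P (d+1) m n \<longrightarrow>
      Uapprox (My P) (Mb P) (Uc d m n) (Y$\<omega>) (bst P (d+1) m n) - Lapprox (Lc d m n) x (Y$\<omega>) (bst P (d+1) m n) \<le> ereal t"
  shows "\<exists>r. LPobj P Lc d m x Y = ereal r \<and> UPobj P Uc d m Y \<le> ereal (r + t)"
proof -
  define L where "L \<omega> n = Lapprox (Lc d m n) x (Y$\<omega>) (bst P (d+1) m n)" for \<omega> n
  define U where "U \<omega> n = Uapprox (My P) (Mb P) (Uc d m n) (Y$\<omega>) (bst P (d+1) m n)" for \<omega> n
  define Lr where "Lr \<omega> n = real_of_ereal (L \<omega> n)" for \<omega> n
  define p where "p n = pid P (d+1) m n" for n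
  have Lreal: "L \<omega> n = ereal (Lr \<omega> n)" if "0 < p n" for \<omega> n
  proof -
    have "L \<omega> n < \<infinity>" unfolding L_def using fin Lapprox_fin by blast
    moreover have "L \<omega> n \<noteq> - \<infinity>"
    proof
      assume "L \<omega> n = - \<infinity>"
      then have inf: "U \<omega> n - L \<omega> n = \<infinity>" by simp
      have "U \<omega> n - L \<omega> n \<le> ereal t" using gap that unfolding U_def L_def p_def by blast
      then show False using inf by simp
    qed
    ultimately show ?thesis unfolding Lr_def by (cases "L \<omega> n") auto
  qed
  have termL: "ereal (p n) * L \<omega> n = ereal (p n * Lr \<omega> n)" for \<omega> n
  proof (cases "p n = 0")
    case True then show ?thesis by (simp add: zero_ereal_def[symmetric])
  next
    case False then have "0 < p n" using pnn p_def by (simp add: order_less_le)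
    then show ?thesis using Lreal by simp
  qed
  have termU: "ereal (p n) * U \<omega> n \<le> ereal (p n * (Lr \<omega> n + t))" for \<omega> n
  proof (cases "p n = 0")
    case True then show ?thesis by (simp add: zero_ereal_def[symmetric])
  next
    case False then have pp: "0 < p n" using pnn p_def by (simp add: order_less_le)
    have "U \<omega> n - ereal (Lr \<omega> n) \<le> ereal t" using gap pp Lreal unfolding U_def L_def p_def by metis
    then have "U \<omega> n \<le> ereal t + ereal (Lr \<omega> n)" by (subst (asm) ereal_minus_le) auto
    then have "U \<omega> n \<le> ereal (Lr \<omega> n + t)" by (simp add: add.commute)
    then have "ereal (p n) * U \<omega> n \<le> ereal (p n) * ereal (Lr \<omega> n + t)"
      using pp by (intro ereal_mult_left_mono) auto
    then show ?thesis by simp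
  qed
  define IL where "IL \<omega> = (\<Sum>n\<in>UNIV. p n * Lr \<omega> n)" for \<omega>
  have iL: "(\<Sum>n\<in>UNIV. ereal (p n) * L \<omega> n) = ereal (IL \<omega>)" for \<omega>
    unfolding IL_def by (simp add: termL)
  have iU: "(\<Sum>n\<in>UNIV. ereal (p n) * U \<omega> n) \<le> ereal (IL \<omega> + t)" for \<omega>
  proof -
    have "(\<Sum>n\<in>UNIV. ereal (p n) * U \<omega> n) \<le> (\<Sum>n\<in>UNIV. ereal (p n * (Lr \<omega> n + t)))"
      by (intro sum_mono termU)
    also have "\<dots> = ereal (\<Sum>n\<in>UNIV. p n * (Lr \<omega> n + t))" by simp
    also have "(\<Sum>n\<in>UNIV. p n * (Lr \<omega> n + t)) = IL \<omega> + t * (\<Sum>n\<in>UNIV. p n)"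
      unfolding IL_def by (simp add: algebra_simps sum.distrib sum_distrib_left)
    also have "(\<Sum>n\<in>UNIV. p n) = 1" using ps p_def by simp
    finally show ?thesis by simp
  qed
  define r where "r = (\<Sum>\<omega>\<in>UNIV. pw TYPE('w) * (cst P d \<bullet> (Y $ \<omega>) + IL \<omega>))"
  have "LPobj P Lc d m x Y = (\<Sum>\<omega>\<in>UNIV. ereal (pw TYPE('w)) *
       (ereal (cst P d \<bullet> (Y $ \<omega>)) + (\<Sum>n\<in>UNIV. ereal (p n) * L \<omega> n)))"
    unfolding LPobj_def L_def p_def using dD by simp
  also have "\<dots> = ereal r" unfolding r_def iL by simp
  finally have e1: "LPobj P Lc d m x Y = ereal r" .
  have "UPobj P Uc d m Y = (\<Sum>\<omega>\<in>UNIV. ereal (pw TYPE('w)) *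
       (ereal (cst P d \<bullet> (Y $ \<omega>)) + (\<Sum>n\<in>UNIV. ereal (p n) * U \<omega> n)))"
    unfolding UPobj_def U_def p_def using dD by simp
  also have "\<dots> \<le> (\<Sum>\<omega>\<in>UNIV. ereal (pw TYPE('w)) *
       (ereal (cst P d \<bullet> (Y $ \<omega>)) + ereal (IL \<omega> + t)))"
    by (intro sum_mono ereal_mult_left_mono add_left_mono iU) (simp add: pw_def)
  also have "\<dots> = ereal (\<Sum>\<omega>\<in>UNIV. pw TYPE('w) * (cst P d \<bullet> (Y $ \<omega>) + IL \<omega> + t))"
    by (simp add: add.assoc)
  also have "(\<Sum>\<omega>\<in>UNIV. pw TYPE('w) * (cst P d \<bullet> (Y $ \<omega>) + IL \<omega> + t)) = r + t * (\<Sum>\<omega>\<in>(UNIV::'w set). pw TYPE('w))"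
    unfolding r_def by (simp add: algebra_simps sum.distrib sum_distrib_left)
  finally have "UPobj P Uc d m Y \<le> ereal (r + t)" by (simp add: pw_def)
  with e1 show ?thesis by blast
qed

lemma obj_last:
  fixes P :: "('x::euclidean_space, 'y::euclidean_space, 'b::euclidean_space, 'r::euclidean_space, 'w::finite, 'm::finite) msp"
  shows "LPobj P Lc (Dn P) m x Y = ereal (\<Sum>\<omega>\<in>UNIV. pw TYPE('w) * (cst P (Dn P) \<bullet> (Y $ \<omega>)))"
    and "UPobj P Uc (Dn P) m Y = ereal (\<Sum>\<omega>\<in>UNIV. pw TYPE('w) * (cst P (Dn P) \<bullet> (Y $ \<omega>)))"
  unfolding LPobj_def UPobj_def by simp_all

lemma LPobj_lt:
  fixes P :: "('x::euclidean_space, 'y::euclidean_space, 'b::euclidean_space, 'r::euclidean_space, 'w::finite, 'm::finite) msp"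
  assumes pnn: "\<forall>n. 0 \<le> pid P (d+1) m n" and fin: "\<forall>n. finite (Lc d m n)"
  shows "LPobj P Lc d m x Y < \<infinity>"
proof -
  have t1: "ereal (pid P (d+1) m n) * Lapprox (Lc d m n) x (Y$\<omega>) (bst P (d+1) m n) \<noteq> \<infinity>" for n \<omega>
  proof -
    have "Lapprox (Lc d m n) x (Y$\<omega>) (bst P (d+1) m n) < \<infinity>" using fin Lapprox_fin by blast
    moreover have "0 \<le> pid P (d+1) m n" using pnn by blast
    ultimately show ?thesis
      by (cases "Lapprox (Lc d m n) x (Y$\<omega>) (bst P (d+1) m n)") (auto simp: ereal_mult_infty)
  qed
  have t2: "(\<Sum>n\<in>UNIV. ereal (pid P (d+1) m n) * Lapprox (Lc d m n) x (Y$\<omega>) (bst P (d+1) m n)) \<noteq> \<infinity>" for \<omega>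
    using t1 by (simp add: sum_Pinfty)
  have t3: "ereal (pw TYPE('w)) *
       (ereal (cst P d \<bullet> (Y $ \<omega>)) +
        (if d = Dn P then 0 else
         \<Sum>n\<in>UNIV. ereal (pid P (d + 1) m n) *
            Lapprox (Lc d m n) x (Y $ \<omega>) (bst P (d + 1) m n))) \<noteq> \<infinity>" for \<omega>
  proof -
    have "ereal (cst P d \<bullet> (Y $ \<omega>)) +
        (if d = Dn P then 0 else
         \<Sum>n\<in>UNIV. ereal (pid P (d + 1) m n) *
            Lapprox (Lc d m n) x (Y $ \<omega>) (bst P (d + 1) m n)) \<noteq> \<infinity>"
      using t2[of \<omega>] by auto
    then show ?thesis
      by (cases "ereal (cst P d \<bullet> (Y $ \<omega>)) +
        (if d = Dn P then 0 else
         \<Sum>n\<in>UNIV. ereal (pid P (d + 1) m n) *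
            Lapprox (Lc d m n) x (Y $ \<omega>) (bst P (d + 1) m n))") (auto simp: pw_def)
  qed
  show ?thesis unfolding LPobj_def using t3 by (simp add: sum_Pinfty less_top[symmetric])
qed

definition stepw where
  "stepw P x \<delta> s s' dh ms ws ys sg \<longleftrightarrow>
       forward P x \<delta> s dh ms ws ys \<and>
       bvalid P x dh ms ws ys sg (Lcol s, Ucol s) \<and>
       (let LU = bcols P x dh ms ws ys sg (Lcol s, Ucol s) (dh - 1) in
        Lcol s' = fst LU \<and> Ucol s' = snd LU \<and>
        (\<forall>m. thlo s' m = LPval P (fst LU) 1 m x 0 (bst1 P m)) \<and>
        (\<forall>m. thup s' m = UPval P (snd LU) 1 m x 0 (bst1 P m)) \<and>
        (\<forall>m. \<exists>la. subgrad (\<lambda>x'. LPval P (fst LU) 1 m x' 0 (bst1 P m)) x la))"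

lemma alg2_step_iff: "alg2_step P x \<delta> s s' \<longleftrightarrow> (\<exists>dh ms ws ys sg. stepw P x \<delta> s s' dh ms ws ys sg)"
  unfolding alg2_step_def stepw_def by simp

lemma bstage_mono:
  "fst LU d' l n \<subseteq> fst (bstage P x ms ws ys sg d LU) d' l n"
  "snd LU d' l n \<subseteq> snd (bstage P x ms ws ys sg d LU) d' l n"
  unfolding bstage_def Let_def by auto

lemma bstage_fin:
  assumes "\<forall>d l n. finite (fst LU d l n) \<and> finite (snd LU d l n)"
  shows "\<forall>d l n. finite (fst (bstage P x ms ws ys sg d' LU) d l n) \<and> finite (snd (bstage P x ms ws ys sg d' LU) d l n)"
  using assms unfolding bstage_def Let_def by auto

lemma bcols_mono:
  assumes "j \<le> j'"
  shows "fst (bcols P x dh ms ws ys sg LU0 j) d' l n \<subseteq> fst (bcols P x dh ms ws ys sg LU0 j') d' l n"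
    and "snd (bcols P x dh ms ws ys sg LU0 j) d' l n \<subseteq> snd (bcols P x dh ms ws ys sg LU0 j') d' l n"
proof -
  show "fst (bcols P x dh ms ws ys sg LU0 j) d' l n \<subseteq> fst (bcols P x dh ms ws ys sg LU0 j') d' l n"
    by (rule lift_Suc_mono_le[of "\<lambda>j. fst (bcols P x dh ms ws ys sg LU0 j) d' l n", OF _ assms])
       (simp add: bstage_mono)
  show "snd (bcols P x dh ms ws ys sg LU0 j) d' l n \<subseteq> snd (bcols P x dh ms ws ys sg LU0 j') d' l n"
    by (rule lift_Suc_mono_le[of "\<lambda>j. snd (bcols P x dh ms ws ys sg LU0 j) d' l n", OF _ assms])
       (simp add: bstage_mono)
qed

lemma bcols_fin:
  assumes "\<forall>d l n. finite (fst LU0 d l n) \<and> finite (snd LU0 d l n)"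
  shows "\<forall>d l n. finite (fst (bcols P x dh ms ws ys sg LU0 j) d l n) \<and> finite (snd (bcols P x dh ms ws ys sg LU0 j) d l n)"
  by (induction j) (use assms in \<open>simp_all add: bstage_fin\<close>)

lemma stepw_mono:
  assumes "stepw P x \<delta> s s' dh ms ws ys sg"
  shows "Lcol s d l n \<subseteq> Lcol s' d l n" "Ucol s d l n \<subseteq> Ucol s' d l n"
  using assms bcols_mono[of 0 "dh - 1" P x dh ms ws ys sg "(Lcol s, Ucol s)" d l n]
  unfolding stepw_def Let_def by auto

lemma stepw_fin:
  assumes "stepw P x \<delta> s s' dh ms ws ys sg" "\<forall>d l n. finite (Lcol s d l n) \<and> finite (Ucol s d l n)"
  shows "\<forall>d l n. finite (Lcol s' d l n) \<and> finite (Ucol s' d l n)"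
  using assms bcols_fin[of "(Lcol s, Ucol s)" P x dh ms ws ys sg "dh - 1"]
  unfolding stepw_def Let_def by auto

lemma stepw_newcut:
  assumes "stepw P x \<delta> s s' dh ms ws ys sg" "2 \<le> dh"
  shows "(real_of_ereal (LPval P (Lcol s) dh m x (ys (dh - 1) $ ws (dh - 1)) (bst P dh (ms (dh - 1)) m)),
          fst (sg dh m), fst (snd (sg dh m)), snd (snd (sg dh m)), x, ys (dh - 1) $ ws (dh - 1),
          bst P dh (ms (dh - 1)) m) \<in> Lcol s' (dh - 1) l m"
    and "(UPval P (Ucol s) dh m x (ys (dh - 1) $ ws (dh - 1)) (bst P dh (ms (dh - 1)) m),
          ys (dh - 1) $ ws (dh - 1), bst P dh (ms (dh - 1)) m) \<in> Ucol s' (dh - 1) l m"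
proof -
  have b1: "bcols P x dh ms ws ys sg (Lcol s, Ucol s) 1 = bstage P x ms ws ys sg dh (Lcol s, Ucol s)"
    by simp
  have m1: "fst (bcols P x dh ms ws ys sg (Lcol s, Ucol s) 1) (dh - 1) l m \<subseteq> Lcol s' (dh - 1) l m"
    "snd (bcols P x dh ms ws ys sg (Lcol s, Ucol s) 1) (dh - 1) l m \<subseteq> Ucol s' (dh - 1) l m"
    using assms bcols_mono[of 1 "dh - 1" P x dh ms ws ys sg "(Lcol s, Ucol s)" "dh - 1" l m]
    unfolding stepw_def Let_def by auto
  show "(real_of_ereal (LPval P (Lcol s) dh m x (ys (dh - 1) $ ws (dh - 1)) (bst P dh (ms (dh - 1)) m)),
          fst (sg dh m), fst (snd (sg dh m)), snd (snd (sg dh m)), x, ys (dh - 1) $ ws (dh - 1),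
          bst P dh (ms (dh - 1)) m) \<in> Lcol s' (dh - 1) l m"
    using m1(1) unfolding b1 bstage_def Let_def by auto
  show "(UPval P (Ucol s) dh m x (ys (dh - 1) $ ws (dh - 1)) (bst P dh (ms (dh - 1)) m),
          ys (dh - 1) $ ws (dh - 1), bst P dh (ms (dh - 1)) m) \<in> Ucol s' (dh - 1) l m"
    using m1(2) unfolding b1 bstage_def Let_def by auto
qed

lemma V_eq:
  assumes "1 \<le> d" "d \<le> Dn P"
  shows "\<exists>g. V P d m x yp b = Inf (g ` feas P d x yp b)"
proof (cases "Dn P - d")
  case 0
  then have "d = Dn P" using assms by simp
  then show ?thesis unfolding V_def by auto
next
  case (Suc k)
  then have "Dn P - Suc k = d" by arith
  then show ?thesis unfolding V_def using Suc by (auto simp: Let_def)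
qed

lemma V_feas:
  assumes "1 \<le> d" "d \<le> Dn P" "\<bar>V P d m x yp b\<bar> \<noteq> \<infinity>"
  shows "feas P d x yp b \<noteq> {}"
proof
  assume "feas P d x yp b = {}"
  moreover obtain g where "V P d m x yp b = Inf (g ` feas P d x yp b)" using V_eq assms by blast
  ultimately have "V P d m x yp b = \<infinity>" by (simp add: top_ereal_def)
  with assms show False by simp
qed

lemma feas_sub: "feas P d x yp b \<subseteq> Yset P d"
  unfolding feas_def by auto

definition Kset where "Kset P d = {Y $ \<omega> | Y \<omega>. Y \<in> Yset P d}"

definition InvB where
  "InvB P x B L \<longleftrightarrow> (\<forall>d'. 1 \<le> d' \<and> d' < Dn P \<longrightarrow> (\<forall>l n c. c \<in> L d' l n \<longrightarrow>
      (\<forall>z\<in>Kset P d'. cv c x z (bst P (d'+1) l n) \<le> B d')))"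

lemma LPval_le_obj: "Y \<in> feas P d x yp b \<Longrightarrow> LPval P L d m x yp b \<le> LPobj P L d m x Y"
  unfolding LPval_def by (rule Inf_lower) auto

lemma UPval_le_obj: "Y \<in> feas P d x yp b \<Longrightarrow> UPval P U d m x yp b \<le> UPobj P U d m Y"
  unfolding UPval_def by (rule Inf_lower) auto

lemma inner_le_C: assumes "norm v \<le> C" shows "a \<bullet> v \<le> norm a * C"
proof -
  have "a \<bullet> v \<le> norm a * norm v" by (metis Cauchy_Schwarz_ineq2 abs_le_iff)
  also have "\<dots> \<le> norm a * C" using assms by (simp add: mult_left_mono)
  finally show ?thesis .
qed

lemma inner_ge_C: assumes "norm v \<le> C" shows "- (norm a * C) \<le> a \<bullet> v"
proof -
  have "- (norm a * norm v) \<le> a \<bullet> v" by (metis Cauchy_Schwarz_ineq2 abs_le_iff minus_le_iff)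
  moreover have "norm a * norm v \<le> norm a * C" using assms by (simp add: mult_left_mono)
  ultimately show ?thesis by linarith
qed

lemma LPval_ub:
  fixes P :: "('x::euclidean_space, 'y::euclidean_space, 'b::euclidean_space, 'r::euclidean_space, 'w::finite, 'm::finite) msp"
  assumes std: "std_assms P x" and d: "2 \<le> d" "d \<le> Dn P" and z: "z \<in> Kset P (d - 1)"
    and Cb: "\<forall>Y\<in>Yset P d. norm Y \<le> C" and inv: "InvB P x B L"
  shows "LPval P L d m x z (bst P d l m) \<le> ereal (norm (cst P d) * C + (if d < Dn P then B d else 0))"
proof -
  obtain Z \<omega> where Z: "z = Z $ \<omega>" "Z \<in> Yset P (d - 1)" using z unfolding Kset_def by blast
  have "\<bar>V P d m x z (bst P d l m)\<bar> \<noteq> \<infinity>"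
    using std d Z unfolding std_assms_def by auto
  then have "feas P d x z (bst P d l m) \<noteq> {}" using V_feas[of d P m x z "bst P d l m"] d by simp
  then obtain Y where Y: "Y \<in> feas P d x z (bst P d l m)" by blast
  then have YS: "Y \<in> Yset P d" using feas_sub by blast
  define Bd where "Bd = (if d < Dn P then B d else 0)"
  have cst_le: "cst P d \<bullet> (Y $ \<omega>') \<le> norm (cst P d) * C" for \<omega>'
  proof -
    have "norm (Y $ \<omega>') \<le> C" using Finite_Cartesian_Product.norm_nth_le[of Y \<omega>'] Cb YS by (meson order_trans)
    then show ?thesis by (rule inner_le_C)
  qed
  have inner: "(if d = Dn P then 0 else \<Sum>n\<in>UNIV. ereal (pid P (d + 1) m n) *
            Lapprox (L d m n) x (Y $ \<omega>') (bst P (d + 1) m n)) \<le> ereal Bd" for \<omega>'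
  proof (cases "d = Dn P")
    case True then show ?thesis by (simp add: Bd_def)
  next
    case False
    then have dl: "d < Dn P" using d by simp
    have pid: "\<forall>n. 0 \<le> pid P (d+1) m n" "(\<Sum>n\<in>UNIV. pid P (d+1) m n) = 1"
      using std dl d unfolding std_assms_def by auto
    have Lle: "Lapprox (L d m n) x (Y $ \<omega>') (bst P (d + 1) m n) \<le> ereal (B d)" for n
    proof (rule Lapprox_le)
      fix c assume "c \<in> L d m n"
      moreover have "Y $ \<omega>' \<in> Kset P d" using YS unfolding Kset_def by blast
      moreover have "1 \<le> d \<and> d < Dn P" using dl d by simp
      ultimately show "cv c x (Y $ \<omega>') (bst P (d + 1) m n) \<le> B d"
        using inv unfolding InvB_def by blast
    qed
    have "(\<Sum>n\<in>UNIV. ereal (pid P (d + 1) m n) * Lapprox (L d m n) x (Y $ \<omega>') (bst P (d + 1) m n))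
        \<le> (\<Sum>n\<in>UNIV. ereal (pid P (d + 1) m n) * ereal (B d))"
      by (intro sum_mono ereal_mult_left_mono Lle) (use pid in auto)
    also have "\<dots> = ereal ((\<Sum>n\<in>UNIV. pid P (d + 1) m n) * B d)" by (simp add: sum_distrib_right)
    finally show ?thesis using False pid dl by (simp add: Bd_def)
  qed
  have "LPobj P L d m x Y \<le> (\<Sum>\<omega>'\<in>(UNIV::'w set). ereal (pw TYPE('w)) * (ereal (norm (cst P d) * C) + ereal Bd))"
    unfolding LPobj_def
    by (intro sum_mono ereal_mult_left_mono add_mono inner) (auto simp: cst_le pw_def)
  also have "\<dots> = ereal (norm (cst P d) * C + Bd)"
    by (simp add: sum_distrib_right[symmetric] pw_def)
  finally show ?thesis using LPval_le_obj[OF Y, of L m] Bd_def by simp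
qed

definition cslope :: "('x, 'y, 'b, 'w) lcut \<Rightarrow> 'y" where "cslope c = fst (snd (snd c))"

lemma cv_lin: "cv c x z b = cv c x 0 b + cslope c \<bullet> z"
  by (cases c) (simp add: cv_def cslope_def inner_diff_right algebra_simps)

lemma bstage_InvB:
  fixes P :: "('x::euclidean_space, 'y::euclidean_space, 'b::euclidean_space, 'r::euclidean_space, 'w::finite, 'm::finite) msp"
  assumes std: "std_assms P x" and d: "2 \<le> d" "d \<le> Dn P"
    and Cb: "\<forall>Y\<in>Yset P d. norm Y \<le> C"
    and inv: "InvB P x B (fst LU)"
    and Bd: "norm (cst P d) * C + (if d < Dn P then B d else 0) \<le> B (d - 1)"
    and fin: "\<forall>m. \<bar>LPval P (fst LU) d m x (ys (d - 1) $ ws (d - 1)) (bst P d (ms (d - 1)) m)\<bar> \<noteq> \<infinity>"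
    and sgr: "\<forall>m. subgrad2 (\<lambda>y' b'. LPval P (fst LU) d m x y' b') (ys (d - 1) $ ws (d - 1)) (bst P d (ms (d - 1)) m)
               (fst (snd (sg d m))) (snd (snd (sg d m)))"
  shows "InvB P x B (fst (bstage P x ms ws ys sg d LU))"
  unfolding InvB_def
proof (intro allI impI ballI)
  fix d' l n c z
  assume d': "1 \<le> d' \<and> d' < Dn P" and c: "c \<in> fst (bstage P x ms ws ys sg d LU) d' l n"
    and z: "z \<in> Kset P d'"
  define yp where "yp = ys (d - 1) $ ws (d - 1)"
  define bb where "bb = bst P d (ms (d - 1)) n"
  define L where "L = fst LU"
  define th where "th = real_of_ereal (LPval P L d n x yp bb)"
  show "cv c x z (bst P (d' + 1) l n) \<le> B d'"
  proof (cases "d' = d - 1 \<and> c \<notin> fst LU d' l n")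
    case False
    then have "c \<in> fst LU d' l n" using c unfolding bstage_def Let_def by (auto split: if_splits)
    then show ?thesis using inv d' z unfolding InvB_def by blast
  next
    case True
    then have dd: "d' = d - 1" and cc: "c = (th, fst (sg d n), fst (snd (sg d n)), snd (snd (sg d n)), x, yp, bb)"
      using c unfolding bstage_def Let_def th_def L_def yp_def bb_def by auto
    have "d' + 1 = d" using dd d by simp
    have f1: "\<bar>LPval P L d n x yp bb\<bar> \<noteq> \<infinity>" using fin[rule_format, of n] unfolding L_def yp_def bb_def by simp
    then have thr: "LPval P L d n x yp bb = ereal th" unfolding th_def by (cases "LPval P L d n x yp bb") auto
    have sg: "LPval P L d n x yp bb + ereal (fst (snd (sg d n)) \<bullet> (z - yp) + snd (snd (sg d n)) \<bullet> (bst P d l n - bb))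
        \<le> LPval P L d n x z (bst P d l n)"
      using sgr unfolding subgrad2_def L_def yp_def bb_def by blast
    have "cv c x z (bst P (d' + 1) l n) = th + fst (snd (sg d n)) \<bullet> (z - yp) + snd (snd (sg d n)) \<bullet> (bst P d l n - bb)"
      unfolding cc cv_def using \<open>d' + 1 = d\<close> by simp
    then have "ereal (cv c x z (bst P (d' + 1) l n)) \<le> LPval P L d n x z (bst P d l n)"
      using sg thr by (simp add: add.assoc)
    also have "\<dots> \<le> ereal (norm (cst P d) * C + (if d < Dn P then B d else 0))"
      unfolding L_def by (rule LPval_ub[OF std d _ Cb inv]) (use z dd in simp)
    finally show ?thesis using Bd dd by simp
  qed
qed

lemma bcols_InvB:
  fixes P :: "('x::euclidean_space, 'y::euclidean_space, 'b::euclidean_space, 'r::euclidean_space, 'w::finite, 'm::finite) msp"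
  assumes std: "std_assms P x" and dh: "dh \<le> Dn P"
    and Cb: "\<forall>d. 2 \<le> d \<longrightarrow> d \<le> Dn P \<longrightarrow> (\<forall>Y\<in>Yset P d. norm Y \<le> C d)"
    and Bd: "\<forall>d. 2 \<le> d \<longrightarrow> d \<le> Dn P \<longrightarrow> norm (cst P d) * C d + (if d < Dn P then B d else 0) \<le> B (d - 1)"
    and bv: "bvalid P x dh ms ws ys sg LU0"
    and inv0: "InvB P x B (fst LU0)"
  shows "j \<le> dh - 1 \<Longrightarrow> InvB P x B (fst (bcols P x dh ms ws ys sg LU0 j))"
proof (induction j)
  case 0 then show ?case using inv0 by simp
next
  case (Suc j)
  then have j2: "j + 2 \<le> dh" by simp
  define d where "d = dh - j"
  have d: "2 \<le> d" "d \<le> Dn P" using j2 dh d_def by auto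
  have IH: "InvB P x B (fst (bcols P x dh ms ws ys sg LU0 j))" using Suc by simp
  have bvj: "\<forall>m. \<bar>LPval P (fst (bcols P x dh ms ws ys sg LU0 j)) d m x (ys (d - 1) $ ws (d - 1)) (bst P d (ms (d - 1)) m)\<bar> \<noteq> \<infinity> \<and>
     subgrad2 (\<lambda>y' b'. LPval P (fst (bcols P x dh ms ws ys sg LU0 j)) d m x y' b') (ys (d - 1) $ ws (d - 1)) (bst P d (ms (d - 1)) m)
               (fst (snd (sg d m))) (snd (snd (sg d m)))"
    using bv j2 unfolding bvalid_def Let_def d_def by auto
  show ?case
    unfolding bcols.simps d_def[symmetric]
    by (rule bstage_InvB[where C="C d", OF std d _ IH]) (use Cb Bd d bvj in auto)
qed

lemma LPobj_lb:
  fixes P :: "('x::euclidean_space, 'y::euclidean_space, 'b::euclidean_space, 'r::euclidean_space, 'w::finite, 'm::finite) msp"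
  assumes dD: "d \<le> Dn P" and Cb: "\<forall>Y\<in>Yset P d. norm Y \<le> C"
    and pnn: "d < Dn P \<longrightarrow> (\<forall>n. 0 \<le> pid P (d+1) m n)"
  shows "\<exists>LB. \<forall>L Y. (d < Dn P \<longrightarrow> (\<forall>n. 0 < pid P (d+1) m n \<longrightarrow> cc n \<in> L d m n)) \<longrightarrow> Y \<in> Yset P d \<longrightarrow>
            ereal LB \<le> LPobj P L d m x Y"
proof -
  define low where "low n = cv (cc n) x 0 (bst P (d+1) m n) - norm (cslope (cc n)) * C" for n
  define I where "I = (if d < Dn P then (\<Sum>n\<in>UNIV. pid P (d+1) m n * low n) else 0)"
  define LB where "LB = - (norm (cst P d) * C) + I"
  have "ereal LB \<le> LPobj P L d m x Y"
    if hL: "d < Dn P \<longrightarrow> (\<forall>n. 0 < pid P (d+1) m n \<longrightarrow> cc n \<in> L d m n)" and Y: "Y \<in> Yset P d" for L Y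
  proof -
    have nY: "norm (Y $ \<omega>) \<le> C" for \<omega>
      using Finite_Cartesian_Product.norm_nth_le[of Y \<omega>] Cb Y by (meson order_trans)
    have cl: "ereal (- (norm (cst P d) * C)) \<le> ereal (cst P d \<bullet> (Y $ \<omega>))" for \<omega>
      using inner_ge_C[OF nY] by simp
    have il: "ereal I \<le> (if d = Dn P then 0 else \<Sum>n\<in>UNIV. ereal (pid P (d + 1) m n) *
            Lapprox (L d m n) x (Y $ \<omega>) (bst P (d + 1) m n))" for \<omega>
    proof (cases "d < Dn P")
      case False then have "d = Dn P" using dD by simp
      then show ?thesis by (simp add: I_def)
    next
      case True
      have t: "ereal (pid P (d+1) m n * low n) \<le> ereal (pid P (d + 1) m n) * Lapprox (L d m n) x (Y $ \<omega>) (bst P (d + 1) m n)" for n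
      proof (cases "pid P (d+1) m n = 0")
        case True then show ?thesis by (simp add: zero_ereal_def[symmetric])
      next
        case False
        then have pp: "0 < pid P (d+1) m n" using pnn True by (simp add: order_less_le)
        then have "cc n \<in> L d m n" using hL True by blast
        then have "ereal (cv (cc n) x (Y $ \<omega>) (bst P (d + 1) m n)) \<le> Lapprox (L d m n) x (Y $ \<omega>) (bst P (d + 1) m n)"
          by (rule Lapprox_ge)
        moreover have "low n \<le> cv (cc n) x (Y $ \<omega>) (bst P (d + 1) m n)"
          unfolding low_def using cv_lin[of "cc n" x "Y $ \<omega>"] inner_ge_C[OF nY, of "cslope (cc n)"] by simp
        ultimately have "ereal (low n) \<le> Lapprox (L d m n) x (Y $ \<omega>) (bst P (d + 1) m n)"
          by (meson ereal_less_eq(3) order_trans)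
        then have "ereal (pid P (d+1) m n) * ereal (low n) \<le> ereal (pid P (d+1) m n) * Lapprox (L d m n) x (Y $ \<omega>) (bst P (d + 1) m n)"
          using pp by (intro ereal_mult_left_mono) auto
        then show ?thesis by simp
      qed
      have "ereal I = (\<Sum>n\<in>UNIV. ereal (pid P (d+1) m n * low n))" using True by (simp add: I_def)
      also have "\<dots> \<le> (\<Sum>n\<in>UNIV. ereal (pid P (d + 1) m n) * Lapprox (L d m n) x (Y $ \<omega>) (bst P (d + 1) m n))"
        by (intro sum_mono t)
      finally show ?thesis using True by simp
    qed
    have "(\<Sum>\<omega>\<in>(UNIV::'w set). ereal (pw TYPE('w)) * (ereal (- (norm (cst P d) * C)) + ereal I)) \<le> LPobj P L d m x Y"
      unfolding LPobj_def
      by (intro sum_mono ereal_mult_left_mono add_mono cl il) (simp add: pw_def)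
    moreover have "(\<Sum>\<omega>\<in>(UNIV::'w set). ereal (pw TYPE('w)) * (ereal (- (norm (cst P d) * C)) + ereal I)) = ereal LB"
      by (simp add: LB_def pw_def)
    ultimately show ?thesis by simp
  qed
  then show ?thesis by blast
qed

lemma finite_rho:
  assumes "finite F" "\<forall>h\<in>F. \<exists>\<rho>>0. \<forall>v. norm v < \<rho> \<longrightarrow> Q h v"
  shows "\<exists>\<rho>>0. \<forall>h\<in>F. \<forall>v. norm v < \<rho> \<longrightarrow> Q h v"
  using assms
proof (induction F rule: finite_induct)
  case empty then show ?case by (auto intro: exI[of _ 1])
next
  case (insert h F)
  then obtain \<rho>1 where r1: "\<rho>1 > 0" "\<forall>h'\<in>F. \<forall>v. norm v < \<rho>1 \<longrightarrow> Q h' v" by auto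
  obtain \<rho>2 where r2: "\<rho>2 > 0" "\<forall>v. norm v < \<rho>2 \<longrightarrow> Q h v" using insert by auto
  show ?case using r1 r2 by (intro exI[of _ "min \<rho>1 \<rho>2"]) auto
qed

lemma poly_cone:
  fixes S :: "'a::euclidean_space set"
  assumes "polyhedron S" "p \<in> S"
  shows "\<exists>\<rho>>0. \<forall>q\<in>S. \<forall>t\<ge>1. norm (t *\<^sub>R (q - p)) < \<rho> \<longrightarrow> p + t *\<^sub>R (q - p) \<in> S"
proof -
  obtain F where F: "finite F" "S = \<Inter>F" "\<forall>h\<in>F. \<exists>a b. a \<noteq> 0 \<and> h = {x. a \<bullet> x \<le> b}"
    using assms(1) unfolding polyhedron_def by blast
  define Q where "Q h v \<longleftrightarrow> (\<forall>q\<in>h. \<forall>t\<ge>1. v = t *\<^sub>R (q - p) \<longrightarrow> p + v \<in> h)" for h v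
  have "\<exists>\<rho>>0. \<forall>v. norm v < \<rho> \<longrightarrow> Q h v" if h: "h \<in> F" for h
  proof -
    obtain a b where ab: "a \<noteq> 0" "h = {x. a \<bullet> x \<le> b}" using F h by blast
    have pa: "a \<bullet> p \<le> b" using assms(2) F h ab by auto
    show ?thesis
    proof (cases "a \<bullet> p = b")
      case True
      show ?thesis
      proof (intro exI[of _ 1] conjI allI impI)
        fix v :: 'a assume "norm v < 1"
        show "Q h v" unfolding Q_def
        proof (intro ballI allI impI)
          fix q t assume q: "q \<in> h" and t: "1 \<le> (t::real)" and v: "v = t *\<^sub>R (q - p)"
          have "a \<bullet> q \<le> b" using q ab by auto
          then have "t * (a \<bullet> q - a \<bullet> p) \<le> 0" using t True by (simp add: mult_nonneg_nonpos)
          then show "p + v \<in> h" using True ab v by (simp add: inner_add_right inner_diff_right)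
        qed
      qed simp
    next
      case False
      then have sl: "0 < b - a \<bullet> p" using pa by simp
      have na: "0 < norm a" using ab by simp
      show ?thesis
      proof (intro exI[of _ "(b - a \<bullet> p) / norm a"] conjI allI impI)
        show "0 < (b - a \<bullet> p) / norm a" using sl na by simp
        fix v :: 'a assume nv: "norm v < (b - a \<bullet> p) / norm a"
        show "Q h v" unfolding Q_def
        proof (intro ballI allI impI)
          fix q t assume "q \<in> h" "1 \<le> (t::real)" "v = t *\<^sub>R (q - p)"
          have "a \<bullet> v \<le> norm a * norm v" by (metis Cauchy_Schwarz_ineq2 abs_le_iff)
          also have "\<dots> < norm a * ((b - a \<bullet> p) / norm a)" by (rule mult_strict_left_mono) (use nv na in auto)
          also have "\<dots> = b - a \<bullet> p" using na by simp
          finally show "p + v \<in> h" using ab by (simp add: inner_add_right)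
        qed
      qed
    qed
  qed
  then obtain \<rho> where r: "\<rho> > 0" "\<forall>h\<in>F. \<forall>v. norm v < \<rho> \<longrightarrow> Q h v"
    using finite_rho[OF F(1), of Q] by blast
  show ?thesis
  proof (intro exI[of _ \<rho>] conjI ballI allI impI)
    fix q t assume q: "q \<in> S" and t: "1 \<le> (t::real)" and n: "norm (t *\<^sub>R (q - p)) < \<rho>"
    show "p + t *\<^sub>R (q - p) \<in> S" unfolding F(2)
    proof
      fix h assume h: "h \<in> F"
      then have "q \<in> h" using q F(2) by blast
      then show "p + t *\<^sub>R (q - p) \<in> h" using r h n t unfolding Q_def by blast
    qed
  qed (use r in simp)
qed

lemma ereal_gap:
  fixes U L :: ereal
  assumes "ereal a < U - L" "U \<le> ereal u" "ereal l \<le> L" "L < \<infinity>"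
  shows "a < u - l"
proof -
  obtain l' where L: "L = ereal l'" "l \<le> l'" using assms(3,4) by (cases L) auto
  show ?thesis
  proof (cases U)
    case (real u')
    then have "u' \<le> u" using assms(2) by simp
    moreover have "a < u' - l'" using assms(1) L real by simp
    ultimately show ?thesis using L by simp
  next
    case PInf then show ?thesis using assms(2) by simp
  next
    case MInf then show ?thesis using assms(1) L by simp
  qed
qed

lemma thr_split:
  assumes "d \<le> D" "2 \<le> D"
  shows "thr D \<delta> d = ereal ((if d < D then \<delta> * real (D - d) / real (D - 1) else 0) + \<delta> / real (D - 1))"
proof (cases "d < D")
  case True
  then have "real (D - d + 1) = real (D - d) + 1" by simp
  then show ?thesis using True by (simp add: thr_def add_divide_distrib distrib_left)
next
  case False
  then have "d = D" using assms by simp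
  then show ?thesis by (simp add: thr_def)
qed

lemma visit:
  fixes P :: "('x::euclidean_space, 'y::euclidean_space, 'b::euclidean_space, 'r::euclidean_space, 'w::finite, 'm::finite) msp"
  assumes std: "std_assms P x" and st: "stepw P x \<delta> s s' dh ms ws ys sg" and dh2: "2 \<le> dh"
    and fin: "\<forall>d l n. finite (Lcol s d l n) \<and> finite (Ucol s d l n)"
  defines "yp \<equiv> ys (dh - 1) $ ws (dh - 1)"
    and "bb \<equiv> bst P dh (ms (dh - 1)) (ms dh)"
    and "th \<equiv> real_of_ereal (LPval P (Lcol s) dh (ms dh) x (ys (dh - 1) $ ws (dh - 1)) (bst P dh (ms (dh - 1)) (ms dh)))"
  shows "LPval P (Lcol s) dh (ms dh) x yp bb = ereal th"
    and "subgrad2 (\<lambda>y' b'. LPval P (Lcol s) dh (ms dh) x y' b') yp bb (fst (snd (sg dh (ms dh)))) (snd (snd (sg dh (ms dh))))"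
    and "(th, fst (sg dh (ms dh)), fst (snd (sg dh (ms dh))), snd (snd (sg dh (ms dh))), x, yp, bb) \<in> Lcol s' (dh - 1) (ms (dh - 1)) (ms dh)"
    and "\<exists>thU. (thU, yp, bb) \<in> Ucol s' (dh - 1) (ms (dh - 1)) (ms dh) \<and>
            thU \<le> ereal (th + (if dh < Dn P then \<delta> * real (Dn P - dh) / real (Dn P - 1) else 0))"
    and "thr (Dn P) \<delta> dh < Uapprox (My P) (Mb P) (Ucol s (dh - 1) (ms (dh - 1)) (ms dh)) yp bb
                              - Lapprox (Lcol s (dh - 1) (ms (dh - 1)) (ms dh)) x yp bb"
    and "ys (dh - 1) \<in> Yset P (dh - 1)"
    and "dh \<le> Dn P"
    and "dh < Dn P \<longrightarrow> (\<forall>n. 0 < pid P (dh + 1) (ms dh) n \<longrightarrow> Lcol s dh (ms dh) n \<noteq> {})"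
proof -
  have fw: "forward P x \<delta> s dh ms ws ys" and bv: "bvalid P x dh ms ws ys sg (Lcol s, Ucol s)"
    using st unfolding stepw_def by auto
  show dD: "dh \<le> Dn P" using fw unfolding forward_def by simp
  have fwd: "0 < pid P dh (ms (dh - 1)) (ms dh) \<and>
        (\<forall>\<omega> n. 0 < pid P dh (ms (dh - 1)) n \<longrightarrow>
            fgap P s x ms ys dh \<omega> n \<le> fgap P s x ms ys dh (ws (dh - 1)) (ms dh)) \<and>
        thr (Dn P) \<delta> dh < fgap P s x ms ys dh (ws (dh - 1)) (ms dh) \<and>
        LPopt P (Lcol s) dh (ms dh) x (ys (dh - 1) $ ws (dh - 1)) (bst P dh (ms (dh - 1)) (ms dh)) (ys dh)"
    using fw dh2 unfolding forward_def by auto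
  show "thr (Dn P) \<delta> dh < Uapprox (My P) (Mb P) (Ucol s (dh - 1) (ms (dh - 1)) (ms dh)) yp bb
                              - Lapprox (Lcol s (dh - 1) (ms (dh - 1)) (ms dh)) x yp bb"
    using fwd unfolding fgap_def yp_def bb_def by simp
  have opt: "LPopt P (Lcol s) dh (ms dh) x yp bb (ys dh)" using fwd unfolding yp_def bb_def by simp
  have bv0: "\<forall>m. \<bar>LPval P (Lcol s) dh m x yp (bst P dh (ms (dh - 1)) m)\<bar> \<noteq> \<infinity> \<and>
              subgrad (\<lambda>x'. LPval P (Lcol s) dh m x' yp (bst P dh (ms (dh - 1)) m)) x (fst (sg dh m)) \<and>
              subgrad2 (\<lambda>y' b'. LPval P (Lcol s) dh m x y' b') yp (bst P dh (ms (dh - 1)) m) (fst (snd (sg dh m))) (snd (snd (sg dh m)))"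
  proof -
    have "0 + 2 \<le> dh" using dh2 by simp
    then show ?thesis using bv unfolding bvalid_def Let_def yp_def by (metis bcols.simps(1) diff_zero fst_conv)
  qed
  have f1: "\<bar>LPval P (Lcol s) dh (ms dh) x yp bb\<bar> \<noteq> \<infinity>" using bv0[rule_format, of "ms dh"] unfolding bb_def by simp
  then show thE: "LPval P (Lcol s) dh (ms dh) x yp bb = ereal th"
    unfolding th_def yp_def[symmetric] bb_def[symmetric] by (cases "LPval P (Lcol s) dh (ms dh) x yp bb") auto
  show "subgrad2 (\<lambda>y' b'. LPval P (Lcol s) dh (ms dh) x y' b') yp bb (fst (snd (sg dh (ms dh)))) (snd (snd (sg dh (ms dh))))"
    using bv0 unfolding bb_def by blast
  show "(th, fst (sg dh (ms dh)), fst (snd (sg dh (ms dh))), snd (snd (sg dh (ms dh))), x, yp, bb) \<in> Lcol s' (dh - 1) (ms (dh - 1)) (ms dh)"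
    using stepw_newcut(1)[OF st dh2, of "ms dh" "ms (dh - 1)"] unfolding th_def yp_def bb_def by simp
  have Ucut: "(UPval P (Ucol s) dh (ms dh) x yp bb, yp, bb) \<in> Ucol s' (dh - 1) (ms (dh - 1)) (ms dh)"
    using stepw_newcut(2)[OF st dh2, of "ms dh" "ms (dh - 1)"] unfolding yp_def bb_def by simp
  have Yf: "ys dh \<in> feas P dh x yp bb" and LPe: "LPobj P (Lcol s) dh (ms dh) x (ys dh) = ereal th"
    using opt thE unfolding LPopt_def by auto
  have UPle: "UPval P (Ucol s) dh (ms dh) x yp bb \<le> UPobj P (Ucol s) dh (ms dh) (ys dh)"
    by (rule UPval_le_obj[OF Yf])
  have lastgap: "\<forall>\<omega> n. 0 < pid P (dh + 1) (ms dh) n \<longrightarrow>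
            fgap P s x ms ys (dh + 1) \<omega> n \<le> thr (Dn P) \<delta> (dh + 1)" if "dh < Dn P"
    using fw that unfolding forward_def by blast
  have thr1: "thr (Dn P) \<delta> (dh + 1) = ereal (\<delta> * real (Dn P - dh) / real (Dn P - 1))" if "dh < Dn P"
  proof -
    have "Dn P - (dh + 1) + 1 = Dn P - dh" using that by simp
    then show ?thesis unfolding thr_def by simp
  qed
  show "\<exists>thU. (thU, yp, bb) \<in> Ucol s' (dh - 1) (ms (dh - 1)) (ms dh) \<and>
            thU \<le> ereal (th + (if dh < Dn P then \<delta> * real (Dn P - dh) / real (Dn P - 1) else 0))"
  proof (intro exI conjI)
    show "(UPval P (Ucol s) dh (ms dh) x yp bb, yp, bb) \<in> Ucol s' (dh - 1) (ms (dh - 1)) (ms dh)" by (rule Ucut)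
    show "UPval P (Ucol s) dh (ms dh) x yp bb \<le> ereal (th + (if dh < Dn P then \<delta> * real (Dn P - dh) / real (Dn P - 1) else 0))"
    proof (cases "dh < Dn P")
      case False
      then have "dh = Dn P" using dD by simp
      then have "UPobj P (Ucol s) dh (ms dh) (ys dh) = LPobj P (Lcol s) dh (ms dh) x (ys dh)"
        using obj_last by metis
      then show ?thesis using UPle LPe False by simp
    next
      case True
      have pd: "\<forall>n. 0 \<le> pid P (dh+1) (ms dh) n" "(\<Sum>n\<in>UNIV. pid P (dh+1) (ms dh) n) = 1"
        using std True dh2 unfolding std_assms_def by auto
      have gp: "\<forall>\<omega> n. 0 < pid P (dh+1) (ms dh) n \<longrightarrow>
          Uapprox (My P) (Mb P) (Ucol s dh (ms dh) n) (ys dh $\<omega>) (bst P (dh+1) (ms dh) n)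
           - Lapprox (Lcol s dh (ms dh) n) x (ys dh $\<omega>) (bst P (dh+1) (ms dh) n)
          \<le> ereal (\<delta> * real (Dn P - dh) / real (Dn P - 1))"
        using lastgap[OF True] thr1[OF True] unfolding fgap_def by simp
      have fn: "\<forall>n. finite (Lcol s dh (ms dh) n)" using fin by blast
      obtain r where r: "LPobj P (Lcol s) dh (ms dh) x (ys dh) = ereal r"
        "UPobj P (Ucol s) dh (ms dh) (ys dh) \<le> ereal (r + \<delta> * real (Dn P - dh) / real (Dn P - 1))"
        using gap_obj[where Lc="Lcol s" and Uc="Ucol s" and Y="ys dh", OF True pd fn gp] by blast
      then have "r = th" using LPe by simp
      then show ?thesis using r UPle True by simp
    qed
  qed
  show "ys (dh - 1) \<in> Yset P (dh - 1)"
  proof (cases "dh = 2")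
    case True
    then have "LPopt P (Lcol s) 1 (ms 1) x 0 (bst1 P (ms 1)) (ys 1)" using fw unfolding forward_def by simp
    then show ?thesis using True feas_sub unfolding LPopt_def by fastforce
  next
    case False
    then have "dh - 1 \<in> {2..dh}" using dh2 by auto
    then have "LPopt P (Lcol s) (dh - 1) (ms (dh - 1)) x (ys (dh - 1 - 1) $ ws (dh - 1 - 1)) (bst P (dh - 1) (ms (dh - 1 - 1)) (ms (dh - 1))) (ys (dh - 1))"
      using fw unfolding forward_def by blast
    then show ?thesis using feas_sub unfolding LPopt_def by blast
  qed
  show "dh < Dn P \<longrightarrow> (\<forall>n. 0 < pid P (dh + 1) (ms dh) n \<longrightarrow> Lcol s dh (ms dh) n \<noteq> {})"
  proof (intro impI allI)
    fix n assume dl: "dh < Dn P" and pp: "0 < pid P (dh + 1) (ms dh) n"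
    have "fgap P s x ms ys (dh + 1) (ws 0) n \<le> thr (Dn P) \<delta> (dh + 1)" using lastgap[OF dl] pp by blast
    then have "Uapprox (My P) (Mb P) (Ucol s dh (ms dh) n) (ys dh $ ws 0) (bst P (dh+1) (ms dh) n)
           - Lapprox (Lcol s dh (ms dh) n) x (ys dh $ ws 0) (bst P (dh+1) (ms dh) n) \<le> thr (Dn P) \<delta> (dh + 1)"
      unfolding fgap_def by simp
    then show "Lcol s dh (ms dh) n \<noteq> {}" using thr1[OF dl] by (auto simp: Lapprox_empty)
  qed
qed

lemma stop_lemma:
  fixes P :: "('x::euclidean_space, 'y::euclidean_space, 'b::euclidean_space, 'r::euclidean_space, 'w::finite, 'm::finite) msp"
  assumes std: "std_assms P x" and dpos: "0 < \<delta>"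
    and st0: "stepw P x \<delta> s0 s dh0 ms0 ws0 ys0 sg0"
    and st: "stepw P x \<delta> s s' 1 ms ws ys sg"
    and fin: "\<forall>d l n. finite (Lcol s d l n) \<and> finite (Ucol s d l n)"
  shows "alg2_stops P \<delta> s'"
proof -
  have D2: "2 \<le> Dn P" using std unfolding std_assms_def by simp
  have lo: "\<forall>m. thlo s m = LPval P (Lcol s) 1 m x 0 (bst1 P m)"
   and up: "\<forall>m. thup s m = UPval P (Ucol s) 1 m x 0 (bst1 P m)"
    using st0 unfolding stepw_def Let_def by auto
  have lo': "thlo s' m = thlo s m" and up': "thup s' m = thup s m" for m
    using st lo up unfolding stepw_def Let_def by auto
  have fw: "forward P x \<delta> s 1 ms ws ys" using st unfolding stepw_def by simp
  define m1 where "m1 = ms 1"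
  have arg: "\<forall>m. 0 < pi1 P m \<longrightarrow> thup s m - thlo s m \<le> thup s m1 - thlo s m1"
    and opt: "LPopt P (Lcol s) 1 m1 x 0 (bst1 P m1) (ys 1)"
    using fw unfolding forward_def m1_def by auto
  have lastgap: "\<forall>\<omega> n. 0 < pid P (1 + 1) m1 n \<longrightarrow> fgap P s x ms ys (1 + 1) \<omega> n \<le> thr (Dn P) \<delta> (1 + 1)"
    using fw D2 unfolding forward_def m1_def by auto
  have thr2: "thr (Dn P) \<delta> (1 + 1) = ereal \<delta>"
  proof -
    have "Dn P - (1 + 1) + 1 = Dn P - 1" using D2 by simp
    moreover have "0 < real (Dn P - 1)" using D2 by simp
    ultimately show ?thesis unfolding thr_def by simp
  qed
  have pd: "\<forall>n. 0 \<le> pid P (1+1) m1 n" "(\<Sum>n\<in>UNIV. pid P (1+1) m1 n) = 1"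
    using std D2 unfolding std_assms_def by auto
  have gp: "\<forall>\<omega> n. 0 < pid P (1+1) m1 n \<longrightarrow>
          Uapprox (My P) (Mb P) (Ucol s 1 m1 n) (ys 1 $\<omega>) (bst P (1+1) m1 n)
           - Lapprox (Lcol s 1 m1 n) x (ys 1 $\<omega>) (bst P (1+1) m1 n) \<le> ereal \<delta>"
    using lastgap thr2 unfolding fgap_def m1_def by simp
  have fn: "\<forall>n. finite (Lcol s 1 m1 n)" using fin by blast
  have D1: "1 < Dn P" using D2 by simp
  obtain r where r: "LPobj P (Lcol s) 1 m1 x (ys 1) = ereal r"
        "UPobj P (Ucol s) 1 m1 (ys 1) \<le> ereal (r + \<delta>)"
    using gap_obj[where Lc="Lcol s" and Uc="Ucol s" and Y="ys 1", OF D1 pd fn gp] by blast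
  have Yf: "ys 1 \<in> feas P 1 x 0 (bst1 P m1)" and lv: "thlo s m1 = ereal r"
    using opt r lo unfolding LPopt_def by auto
  have "thup s m1 \<le> ereal (r + \<delta>)"
    using UPval_le_obj[OF Yf, of "Ucol s" m1] r up by (metis order_trans)
  then have g1: "thup s m1 - thlo s m1 \<le> ereal \<delta>" using lv
    by (cases "thup s m1") (auto simp: ereal_minus_le)
  have pi: "\<forall>m. 0 \<le> pi1 P m" "(\<Sum>m\<in>UNIV. pi1 P m) = 1" using std unfolding std_assms_def by auto
  define \<rho> where "\<rho> m = real_of_ereal (thlo s m)" for m
  have goodm: "thlo s m = ereal (\<rho> m) \<and> thup s m \<le> ereal (\<rho> m + \<delta>)" if pm: "0 < pi1 P m" for m
  proof -
    have gm: "thup s m - thlo s m \<le> ereal \<delta>" using arg pm g1 by (meson order_trans)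
    have nm: "thlo s m \<noteq> - \<infinity>"
    proof
      assume "thlo s m = - \<infinity>"
      then have "thup s m - thlo s m = \<infinity>" by simp
      with gm show False by simp
    qed
    have "\<bar>V1 P m x\<bar> \<noteq> \<infinity>" using std unfolding std_assms_def by auto
    then have "feas P 1 x 0 (bst1 P m) \<noteq> {}" using V_feas[of 1 P m x 0 "bst1 P m"] D2 unfolding V1_def by simp
    then obtain Y where Y: "Y \<in> feas P 1 x 0 (bst1 P m)" by blast
    have pn: "\<forall>n. 0 \<le> pid P (1+1) m n" using std D2 unfolding std_assms_def by auto
    have fn1: "\<forall>n. finite (Lcol s 1 m n)" using fin by blast
    have "thlo s m \<le> LPobj P (Lcol s) 1 m x Y" using LPval_le_obj[OF Y] lo by simp
    also have "\<dots> < \<infinity>" by (rule LPobj_lt[where Lc="Lcol s", OF pn fn1])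
    finally have "thlo s m < \<infinity>" .
    then have e1: "thlo s m = ereal (\<rho> m)" using nm unfolding \<rho>_def by (cases "thlo s m") auto
    then have "thup s m \<le> ereal \<delta> + ereal (\<rho> m)" using gm by (simp add: ereal_minus_le)
    then show ?thesis using e1 by (simp add: add.commute)
  qed
  have tl: "theta_lo P s' = ereal (\<Sum>m\<in>UNIV. pi1 P m * \<rho> m)"
  proof -
    have "ereal (pi1 P m) * thlo s' m = ereal (pi1 P m * \<rho> m)" for m
    proof (cases "pi1 P m = 0")
      case True then show ?thesis by (simp add: zero_ereal_def[symmetric])
    next
      case False then have "0 < pi1 P m" using pi by (simp add: order_less_le)
      then show ?thesis using goodm lo' by simp
    qed
    then show ?thesis unfolding theta_lo_def by simp
  qed
  have tu: "theta_up P s' \<le> ereal ((\<Sum>m\<in>UNIV. pi1 P m * \<rho> m) + \<delta>)"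
  proof -
    have t: "ereal (pi1 P m) * thup s' m \<le> ereal (pi1 P m * (\<rho> m + \<delta>))" for m
    proof (cases "pi1 P m = 0")
      case True then show ?thesis by (simp add: zero_ereal_def[symmetric])
    next
      case False then have pp: "0 < pi1 P m" using pi by (simp add: order_less_le)
      then have "ereal (pi1 P m) * thup s' m \<le> ereal (pi1 P m) * ereal (\<rho> m + \<delta>)"
        using goodm up' by (intro ereal_mult_left_mono) auto
      then show ?thesis by simp
    qed
    have "theta_up P s' \<le> (\<Sum>m\<in>UNIV. ereal (pi1 P m * (\<rho> m + \<delta>)))"
      unfolding theta_up_def by (intro sum_mono t)
    also have "\<dots> = ereal ((\<Sum>m\<in>UNIV. pi1 P m * \<rho> m) + \<delta> * (\<Sum>m\<in>UNIV. pi1 P m))"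
      by (simp add: algebra_simps sum.distrib sum_distrib_left)
    finally show ?thesis using pi by simp
  qed
  show ?thesis unfolding alg2_stops_def using tl tu
    by (simp add: ereal_minus_le add.commute)
qed

primrec hB :: "(nat \<Rightarrow> real) \<Rightarrow> (nat \<Rightarrow> real) \<Rightarrow> nat \<Rightarrow> nat \<Rightarrow> real" where
  "hB b0 u D 0 = 0"
| "hB b0 u D (Suc j) = max (b0 (D - Suc j)) (u (D - j) + hB b0 u D j)"

lemma hB_props:
  assumes "1 \<le> d'" "d' < D"
  shows "b0 d' \<le> hB b0 u D (D - d')"
    and "u (d' + 1) + (if d' + 1 < D then hB b0 u D (D - (d' + 1)) else 0) \<le> hB b0 u D (D - d')"
proof -
  have e: "D - d' = Suc (D - (d' + 1))" using assms by arith
  have e2: "D - Suc (D - (d' + 1)) = d'" "D - (D - (d' + 1)) = d' + 1" "D - Suc (D - Suc d') = d'" "D - (D - Suc d') = Suc d'" using assms by arith+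
  show "b0 d' \<le> hB b0 u D (D - d')" unfolding e by (simp add: e2)
  show "u (d' + 1) + (if d' + 1 < D then hB b0 u D (D - (d' + 1)) else 0) \<le> hB b0 u D (D - d')"
  proof (cases "d' + 1 < D")
    case True then show ?thesis unfolding e by (simp add: e2)
  next
    case False then have "D - (d' + 1) = 0" "Suc d' = D" using assms by simp_all
    then show ?thesis unfolding e using False by (simp add: e2)
  qed
qed

theorem theorem2:
  fixes P :: "('x::euclidean_space, 'y::euclidean_space, 'b::euclidean_space, 'r::euclidean_space, 'w::finite, 'm::finite) msp"
    and x :: 'x and \<delta> :: real
    and run :: "nat \<Rightarrow> ('x, 'y, 'b, 'w, 'm) astate"
  assumes "std_assms P x"
    and "0 < \<delta>"
    and "\<forall>d l n. finite (Lcol (run 0) d l n) \<and> finite (Ucol (run 0) d l n)"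
    and "\<forall>m. thlo (run 0) m = - \<infinity> \<and> thup (run 0) m = \<infinity>"
    and "\<forall>k. alg2_step P x \<delta> (run k) (run (Suc k))"
  shows "\<exists>k. alg2_stops P \<delta> (run (Suc k))"
proof (rule ccontr)
  assume nstop: "\<not> (\<exists>k. alg2_stops P \<delta> (run (Suc k)))"
  have std: "std_assms P x" by (rule assms(1))
  have D2: "2 \<le> Dn P" using std unfolding std_assms_def by simp
  have "\<forall>k. \<exists>t. stepw P x \<delta> (run k) (run (Suc k)) (fst t) (fst (snd t)) (fst (snd (snd t)))
                 (fst (snd (snd (snd t)))) (snd (snd (snd (snd t))))"
  proof
    fix k
    obtain dh ms ws ys sg where "stepw P x \<delta> (run k) (run (Suc k)) dh ms ws ys sg"
      using assms(5) alg2_step_iff by blast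
    then show "\<exists>t. stepw P x \<delta> (run k) (run (Suc k)) (fst t) (fst (snd t)) (fst (snd (snd t)))
                 (fst (snd (snd (snd t)))) (snd (snd (snd (snd t))))"
      by (intro exI[of _ "(dh, ms, ws, ys, sg)"]) simp
  qed
  from choice[OF this] obtain W where W: "\<forall>k. stepw P x \<delta> (run k) (run (Suc k)) (fst (W k)) (fst (snd (W k)))
        (fst (snd (snd (W k)))) (fst (snd (snd (snd (W k))))) (snd (snd (snd (snd (W k)))))" by blast
  define DH where "DH k = fst (W k)" for k
  define MS where "MS k = fst (snd (W k))" for k
  define WS where "WS k = fst (snd (snd (W k)))" for k
  define YS where "YS k = fst (snd (snd (snd (W k))))" for k
  define SG where "SG k = snd (snd (snd (snd (W k))))" for k
  have st: "stepw P x \<delta> (run k) (run (Suc k)) (DH k) (MS k) (WS k) (YS k) (SG k)" for k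
    using W unfolding DH_def MS_def WS_def YS_def SG_def by blast
  have fin: "\<forall>d l n. finite (Lcol (run k) d l n) \<and> finite (Ucol (run k) d l n)" for k
  proof (induction k)
    case 0 then show ?case using assms(3) by simp
  next
    case (Suc k) then show ?case using stepw_fin[OF st[of k]] by blast
  qed
  have monoL: "Lcol (run k) d l n \<subseteq> Lcol (run k') d l n" if "k \<le> k'" for k k' d l n
    by (rule lift_Suc_mono_le[of "\<lambda>k. Lcol (run k) d l n", OF _ that]) (use stepw_mono(1)[OF st] in auto)
  have monoU: "Ucol (run k) d l n \<subseteq> Ucol (run k') d l n" if "k \<le> k'" for k k' d l n
    by (rule lift_Suc_mono_le[of "\<lambda>k. Ucol (run k) d l n", OF _ that]) (use stepw_mono(2)[OF st] in auto)
  have dhD: "1 \<le> DH k \<and> DH k \<le> Dn P" for k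
    using st[of k] unfolding stepw_def forward_def by simp

  have "\<forall>d. \<exists>c. 0 \<le> c \<and> (1 \<le> d \<and> d \<le> Dn P \<longrightarrow> (\<forall>Y\<in>Yset P d. norm Y \<le> c))"
  proof
    fix d
    show "\<exists>c. 0 \<le> c \<and> (1 \<le> d \<and> d \<le> Dn P \<longrightarrow> (\<forall>Y\<in>Yset P d. norm Y \<le> c))"
    proof (cases "1 \<le> d \<and> d \<le> Dn P")
      case True
      then have "compact (Yset P d)" using std unfolding std_assms_def by auto
      then obtain a where "\<forall>Y\<in>Yset P d. norm Y \<le> a" using compact_imp_bounded bounded_iff by metis
      then show ?thesis by (intro exI[of _ "max a 0"]) (auto simp: le_max_iff_disj)
    next
      case False then show ?thesis by (intro exI[of _ 0]) auto
    qed
  qed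
  from choice[OF this] obtain C where C: "\<forall>d. 0 \<le> C d \<and> (1 \<le> d \<and> d \<le> Dn P \<longrightarrow> (\<forall>Y\<in>Yset P d. norm Y \<le> C d))"
    by blast
  have CK: "norm z \<le> C d" if zK: "z \<in> Kset P d" "1 \<le> d" "d \<le> Dn P" for z d
  proof -
    obtain Y \<omega> where "z = Y $ \<omega>" "Y \<in> Yset P d" using zK(1) unfolding Kset_def by blast
    then show ?thesis using C zK Finite_Cartesian_Product.norm_nth_le[of Y \<omega>] by (meson order_trans)
  qed

  define f0 where "f0 d' l n (c::('x,'y,'b,'w) lcut) = \<bar>cv c x 0 (bst P (d'+1) l n) + norm (cslope c) * C d'\<bar>" for d' l n c
  define b0 where "b0 d' = (\<Sum>l\<in>UNIV. \<Sum>n\<in>UNIV. \<Sum>c\<in>Lcol (run 0) d' l n. f0 d' l n c)" for d'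
  have b0P: "cv c x z (bst P (d'+1) l n) \<le> b0 d'"
    if "1 \<le> d'" "d' < Dn P" "c \<in> Lcol (run 0) d' l n" "z \<in> Kset P d'" for d' l n c z
  proof -
    have "norm z \<le> C d'" using CK that by simp
    then have "cslope c \<bullet> z \<le> norm (cslope c) * C d'" by (rule inner_le_C)
    then have "cv c x z (bst P (d'+1) l n) \<le> f0 d' l n c"
      unfolding f0_def using cv_lin[of c x z] by simp
    also have "\<dots> \<le> (\<Sum>c\<in>Lcol (run 0) d' l n. f0 d' l n c)"
      by (rule member_le_sum) (use that fin in \<open>auto simp: f0_def\<close>)
    also have "\<dots> \<le> (\<Sum>n\<in>UNIV. \<Sum>c\<in>Lcol (run 0) d' l n. f0 d' l n c)"
      by (rule member_le_sum) (auto simp: f0_def intro: sum_nonneg)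
    also have "\<dots> \<le> b0 d'"
      unfolding b0_def by (rule member_le_sum) (auto simp: f0_def intro!: sum_nonneg)
    finally show ?thesis .
  qed
  define u where "u d = norm (cst P d) * C d" for d
  define B where "B d = hB b0 u (Dn P) (Dn P - d)" for d
  have B1: "b0 d' \<le> B d'" if "1 \<le> d'" "d' < Dn P" for d'
    unfolding B_def using hB_props(1)[OF that] by blast
  have B2: "norm (cst P d) * C d + (if d < Dn P then B d else 0) \<le> B (d - 1)" if "2 \<le> d" "d \<le> Dn P" for d
  proof -
    have a: "1 \<le> d - 1" "d - 1 < Dn P" using that by auto
    have e: "d - 1 + 1 = d" using that by simp
    have h: "u (d - 1 + 1) + (if d - 1 + 1 < Dn P then hB b0 u (Dn P) (Dn P - (d - 1 + 1)) else 0) \<le> hB b0 u (Dn P) (Dn P - (d - 1))"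
      by (rule hB_props(2)[OF a])
    show ?thesis using h[unfolded e] unfolding B_def u_def by simp
  qed
  have inv: "InvB P x B (Lcol (run k))" for k
  proof (induction k)
    case 0
    show ?case unfolding InvB_def
    proof (intro allI impI ballI)
      fix d' l n c z assume "1 \<le> d' \<and> d' < Dn P" "c \<in> Lcol (run 0) d' l n" "z \<in> Kset P d'"
      then show "cv c x z (bst P (d' + 1) l n) \<le> B d'" using b0P B1 by (meson order_trans)
    qed
  next
    case (Suc k)
    have bv: "bvalid P x (DH k) (MS k) (WS k) (YS k) (SG k) (Lcol (run k), Ucol (run k))"
      using st[of k] unfolding stepw_def by simp
    have Cb: "\<forall>d. 2 \<le> d \<longrightarrow> d \<le> Dn P \<longrightarrow> (\<forall>Y\<in>Yset P d. norm Y \<le> C d)" using C by auto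
    have Bd: "\<forall>d. 2 \<le> d \<longrightarrow> d \<le> Dn P \<longrightarrow> norm (cst P d) * C d + (if d < Dn P then B d else 0) \<le> B (d - 1)"
      using B2 by blast
    have "InvB P x B (fst (bcols P x (DH k) (MS k) (WS k) (YS k) (SG k) (Lcol (run k), Ucol (run k)) (DH k - 1)))"
      by (rule bcols_InvB[OF std _ Cb Bd bv]) (use dhD Suc.IH in auto)
    moreover have "Lcol (run (Suc k)) = fst (bcols P x (DH k) (MS k) (WS k) (YS k) (SG k) (Lcol (run k), Ucol (run k)) (DH k - 1))"
      using st[of k] unfolding stepw_def Let_def by simp
    ultimately show ?case by simp
  qed

  have deep: "2 \<le> DH k" if kge: "1 \<le> k" for k
  proof (rule ccontr)
    assume "\<not> 2 \<le> DH k"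
    then have d1: "DH k = 1" using dhD[of k] by simp
    obtain k1 where k1: "k = Suc k1" using kge by (cases k) auto
    have "alg2_stops P \<delta> (run (Suc k))"
      using stop_lemma[OF std assms(2) st[of k1], of "run (Suc k)"] st[of k] d1 fin[of k] k1 by simp
    with nstop show False by blast
  qed

  define A where "A = {k::nat. 1 \<le> k}"
  have infA: "infinite A" unfolding A_def infinite_nat_iff_unbounded_le by (metis le_add2 mem_Collect_eq plus_1_eq_Suc le_add1 Suc_le_eq zero_less_Suc)
  define tup where "tup k = (DH k, MS k (DH k - 1), MS k (DH k), WS k (DH k - 1))" for k
  have "tup ` A \<subseteq> {..Dn P} \<times> UNIV \<times> UNIV \<times> UNIV" using dhD unfolding tup_def by auto
  then have "finite (tup ` A)" by (rule finite_subset) simp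
  then obtain k0 where k0: "k0 \<in> A" "infinite {k \<in> A. tup k = tup k0}"
    using pigeonhole_infinite[OF infA] by blast
  define I where "I = {k \<in> A. tup k = tup k0}"
  have infI: "infinite I" using k0 unfolding I_def by simp
  define d where "d = DH k0"
  define l where "l = MS k0 (d - 1)"
  define m where "m = MS k0 d"
  define \<omega> where "\<omega> = WS k0 (d - 1)"
  have Ik: "DH k = d \<and> MS k (d - 1) = l \<and> MS k d = m \<and> WS k (d - 1) = \<omega> \<and> 1 \<le> k" if "k \<in> I" for k
    using that unfolding I_def A_def tup_def d_def l_def m_def \<omega>_def by auto
  have d2: "2 \<le> d" using deep k0(1) unfolding d_def A_def by simp
  have dD: "d \<le> Dn P" using dhD unfolding d_def by simp
  define en where "en = enumerate I"
  have enI: "en i \<in> I" for i unfolding en_def by (rule enumerate_in_set[OF infI])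
  have enm: "i < i' \<Longrightarrow> en i < en i'" for i i' unfolding en_def by (rule enumerate_mono[OF _ infI])
  define bb where "bb = bst P d l m"
  define yv where "yv k = YS k (d - 1) $ \<omega>" for k
  define ee where "ee = (if d < Dn P then \<delta> * real (Dn P - d) / real (Dn P - 1) else 0)"
  define \<eta> where "\<eta> = \<delta> / real (Dn P - 1)"
  have eta: "0 < \<eta>" unfolding \<eta>_def using assms(2) D2 by simp
  have thrd: "thr (Dn P) \<delta> d = ereal (ee + \<eta>)" unfolding ee_def \<eta>_def by (rule thr_split[OF dD D2])
  define th where "th k = real_of_ereal (LPval P (Lcol (run k)) d m x (yv k) bb)" for k
  define sgm where "sgm k = fst (snd (SG k d m))" for k
  have V: "LPval P (Lcol (run k)) d m x (yv k) bb = ereal (th k)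
     \<and> subgrad2 (\<lambda>y' b'. LPval P (Lcol (run k)) d m x y' b') (yv k) bb (sgm k) (snd (snd (SG k d m)))
     \<and> (th k, fst (SG k d m), sgm k, snd (snd (SG k d m)), x, yv k, bb) \<in> Lcol (run (Suc k)) (d - 1) l m
     \<and> (\<exists>thU. (thU, yv k, bb) \<in> Ucol (run (Suc k)) (d - 1) l m \<and> thU \<le> ereal (th k + ee))
     \<and> thr (Dn P) \<delta> d < Uapprox (My P) (Mb P) (Ucol (run k) (d - 1) l m) (yv k) bb
                              - Lapprox (Lcol (run k) (d - 1) l m) x (yv k) bb
     \<and> YS k (d - 1) \<in> Yset P (d - 1)
     \<and> (d < Dn P \<longrightarrow> (\<forall>n. 0 < pid P (d + 1) m n \<longrightarrow> Lcol (run k) d m n \<noteq> {}))" if kI: "k \<in> I" for k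
  proof -
    have ik: "DH k = d" "MS k (d - 1) = l" "MS k d = m" "WS k (d - 1) = \<omega>" using Ik[OF kI] by auto
    have dk: "2 \<le> DH k" using ik d2 by simp
    note vs = visit[OF std st[of k] dk fin[of k]]
    show ?thesis using vs unfolding ik th_def yv_def bb_def sgm_def ee_def by simp
  qed
  have dm: "d - 1 \<in> {1..Dn P}" using d2 dD by auto
  have pc: "\<forall>d\<in>{1..Dn P}. polyhedron (Yset P d) \<and> compact (Yset P d)" using std unfolding std_assms_def by auto
  have cpt: "compact (Yset P (d - 1))" and poly: "polyhedron (Yset P (d - 1))"
    using pc dm by blast+
  have Yin: "YS (en i) (d - 1) \<in> Yset P (d - 1)" for i using V[OF enI[of i]] by blast
  obtain Ys r where Ys: "Ys \<in> Yset P (d - 1)" and r: "strict_mono r"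
      and lim: "((\<lambda>i. YS (en i) (d - 1)) \<circ> r) \<longlonglongrightarrow> Ys"
    using seq_compactE[OF compact_imp_seq_compact[OF cpt], of "\<lambda>i. YS (en i) (d - 1)"] Yin by blast
  define p where "p i = en (r i)" for i
  have pI: "p i \<in> I" for i unfolding p_def by (rule enI)
  have pm: "i < i' \<Longrightarrow> p i < p i'" for i i' unfolding p_def using r enm strict_monoD by blast
  have lim2: "\<forall>\<epsilon>>0. \<exists>N. \<forall>i\<ge>N. norm (YS (p i) (d - 1) - Ys) < \<epsilon>"
    using lim unfolding LIMSEQ_iff p_def comp_def by blast
  define UB where "UB = norm (cst P d) * C d + (if d < Dn P then B d else 0)"
  have Cd: "\<forall>Y\<in>Yset P d. norm Y \<le> C d" using C d2 dD by auto
  have ub: "LPval P (Lcol (run k)) d m x z bb \<le> ereal UB" if "z \<in> Kset P (d - 1)" for k z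
    unfolding UB_def bb_def by (rule LPval_ub[OF std d2 dD that Cd inv])
  define cc where "cc n = (SOME c. c \<in> Lcol (run (p 0)) d m n)" for n
  have pnn: "d < Dn P \<longrightarrow> (\<forall>n. 0 \<le> pid P (d+1) m n)" using std d2 unfolding std_assms_def by auto
  obtain LB where LB: "\<forall>L Y. (d < Dn P \<longrightarrow> (\<forall>n. 0 < pid P (d+1) m n \<longrightarrow> cc n \<in> L d m n)) \<longrightarrow> Y \<in> Yset P d \<longrightarrow>
            ereal LB \<le> LPobj P L d m x Y"
    using LPobj_lb[OF dD Cd pnn, of cc x] by blast
  have ccin: "d < Dn P \<longrightarrow> (\<forall>n. 0 < pid P (d+1) m n \<longrightarrow> cc n \<in> Lcol (run (p i)) d m n)" for i
  proof (intro impI allI)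
    fix n assume "d < Dn P" "0 < pid P (d+1) m n"
    then have "Lcol (run (p 0)) d m n \<noteq> {}" using V[OF pI[of 0]] by blast
    then have "cc n \<in> Lcol (run (p 0)) d m n" unfolding cc_def by (simp add: some_in_eq)
    moreover have "p 0 \<le> p i" using pm by (cases "i = 0") (auto simp: less_imp_le)
    ultimately show "cc n \<in> Lcol (run (p i)) d m n" using monoL by blast
  qed
  have thLB: "LB \<le> th (p i)" for i
  proof -
    have "ereal LB \<le> LPval P (Lcol (run (p i))) d m x (yv (p i)) bb"
      unfolding LPval_def
    proof (rule Inf_greatest)
      fix v assume "v \<in> LPobj P (Lcol (run (p i))) d m x ` feas P d x (yv (p i)) bb"
      then obtain Y where "Y \<in> feas P d x (yv (p i)) bb" "v = LPobj P (Lcol (run (p i))) d m x Y" by blast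
      then show "ereal LB \<le> v" using LB ccin[of i] feas_sub by blast
    qed
    then show ?thesis using V[OF pI[of i]] by simp
  qed
  define R where "R = UB - LB"
  have sb: "sgm (p i) \<bullet> (z - yv (p i)) \<le> R" if "z \<in> Kset P (d - 1)" for i z
  proof -
    have "LPval P (Lcol (run (p i))) d m x (yv (p i)) bb
          + ereal (sgm (p i) \<bullet> (z - yv (p i)) + snd (snd (SG (p i) d m)) \<bullet> (bb - bb))
          \<le> LPval P (Lcol (run (p i))) d m x z bb"
      using V[OF pI[of i]] unfolding subgrad2_def by blast
    then have "ereal (th (p i) + sgm (p i) \<bullet> (z - yv (p i))) \<le> ereal UB"
      using V[OF pI[of i]] ub[OF that, of "p i"] by (metis (no_types, lifting) order_trans inner_zero_right add.right_neutral diff_self plus_ereal.simps(1))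
    then show ?thesis using thLB[of i] unfolding R_def by simp
  qed
  have sa: "\<eta> - My P * l1norm (yv (p i) - yv (p i')) < sgm (p i) \<bullet> (yv (p i) - yv (p i'))" if "i < i'" for i i'
  proof -
    have le: "Suc (p i) \<le> p i'" using pm[OF that] by simp
    have cutL: "(th (p i), fst (SG (p i) d m), sgm (p i), snd (snd (SG (p i) d m)), x, yv (p i), bb) \<in> Lcol (run (p i')) (d - 1) l m"
      using V[OF pI[of i]] monoL[OF le] by blast
    obtain thU where cutU: "(thU, yv (p i), bb) \<in> Ucol (run (p i')) (d - 1) l m" and thU: "thU \<le> ereal (th (p i) + ee)"
      using V[OF pI[of i]] monoU[OF le] by blast
    have Lge: "ereal (th (p i) + sgm (p i) \<bullet> (yv (p i') - yv (p i))) \<le> Lapprox (Lcol (run (p i')) (d - 1) l m) x (yv (p i')) bb"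
      using Lapprox_ge[OF cutL, of x "yv (p i')" bb] unfolding cv_def by simp
    have Lfin: "Lapprox (Lcol (run (p i')) (d - 1) l m) x (yv (p i')) bb < \<infinity>"
      using Lapprox_fin fin by blast
    have "Uapprox (My P) (Mb P) (Ucol (run (p i')) (d - 1) l m) (yv (p i')) bb
        \<le> thU + ereal (My P * l1norm (yv (p i) - yv (p i'))) + ereal (Mb P * l1norm (bb - bb))"
      using Uapprox_le[OF _ cutU] fin by blast
    also have "\<dots> \<le> ereal (th (p i) + ee + My P * l1norm (yv (p i) - yv (p i')))"
      using thU by (cases thU) auto
    finally have Ule: "Uapprox (My P) (Mb P) (Ucol (run (p i')) (d - 1) l m) (yv (p i')) bb
        \<le> ereal (th (p i) + ee + My P * l1norm (yv (p i) - yv (p i')))" .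
    have "ee + \<eta> < (th (p i) + ee + My P * l1norm (yv (p i) - yv (p i'))) - (th (p i) + sgm (p i) \<bullet> (yv (p i') - yv (p i)))"
      by (rule ereal_gap[OF _ Ule Lge Lfin]) (use V[OF pI[of i']] thrd in simp)
    then show ?thesis by (simp add: inner_diff_right algebra_simps)
  qed
  obtain \<rho> where rho: "\<rho> > 0" "\<forall>q\<in>Yset P (d - 1). \<forall>t\<ge>1. norm (t *\<^sub>R (q - Ys)) < \<rho> \<longrightarrow> Ys + t *\<^sub>R (q - Ys) \<in> Yset P (d - 1)"
    using poly_cone[OF poly Ys] by blast
  define nB where "nB = real DIM('y)"
  have nB: "0 < nB" unfolding nB_def by simp
  have My: "0 < My P" using std unfolding std_assms_def by simp
  define T where "T = 2 + 4 * \<bar>R\<bar> / \<eta>"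
  have T: "2 \<le> T" unfolding T_def using eta by simp
  define q where "q = \<eta> / (4 * My P * nB)"
  have q: "0 < q" unfolding q_def using eta My nB by simp
  define \<epsilon>1 where "\<epsilon>1 = min (\<rho> / T) q"
  have e1: "0 < \<epsilon>1" unfolding \<epsilon>1_def using rho T q by simp
  obtain i where i: "norm (YS (p i) (d - 1) - Ys) < \<epsilon>1" using lim2 e1 by blast
  define \<epsilon>2 where "\<epsilon>2 = min q (\<eta> / (4 * (norm (sgm (p i)) + 1)))"
  have sp: "0 < 4 * (norm (sgm (p i)) + 1)" by (simp add: add_nonneg_pos)
  have e2: "0 < \<epsilon>2" unfolding \<epsilon>2_def using q eta sp by (simp del: distrib_left distrib_right)
  obtain N2 where N2: "\<forall>i'\<ge>N2. norm (YS (p i') (d - 1) - Ys) < \<epsilon>2" using lim2 e2 by blast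
  define i' where "i' = max N2 (Suc i)"
  have ii: "i < i'" unfolding i'_def by simp
  have i2: "norm (YS (p i') (d - 1) - Ys) < \<epsilon>2" using N2 unfolding i'_def by simp
  define ys where "ys = Ys $ \<omega>"
  have n1: "norm (yv (p i) - ys) < \<epsilon>1"
    using Finite_Cartesian_Product.norm_nth_le[of "YS (p i) (d - 1) - Ys" \<omega>] i unfolding yv_def ys_def by simp
  have n2: "norm (yv (p i') - ys) < \<epsilon>2"
    using Finite_Cartesian_Product.norm_nth_le[of "YS (p i') (d - 1) - Ys" \<omega>] i2 unfolding yv_def ys_def by simp
  have "norm (yv (p i) - yv (p i')) \<le> norm (yv (p i) - ys) + norm (yv (p i') - ys)"
    by (metis norm_triangle_ineq4 diff_diff_eq2 norm_minus_commute add_diff_cancel_left' diff_add_cancel norm_diff_triangle_ineq)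
  also have "\<dots> < q + q" using n1 n2 unfolding \<epsilon>1_def \<epsilon>2_def by simp
  finally have nd: "norm (yv (p i) - yv (p i')) < 2 * q" by simp
  have "l1norm (yv (p i) - yv (p i')) \<le> nB * norm (yv (p i) - yv (p i'))" unfolding nB_def by (rule l1norm_le)
  also have "\<dots> < nB * (2 * q)" using nd nB by simp
  finally have "My P * l1norm (yv (p i) - yv (p i')) < My P * (nB * (2 * q))" using My by simp
  also have "My P * (nB * (2 * q)) = \<eta> / 2" unfolding q_def using My nB by (simp add: field_simps)
  finally have a1: "My P * l1norm (yv (p i) - yv (p i')) < \<eta> / 2" .
  have a2: "\<eta> / 2 < sgm (p i) \<bullet> (yv (p i) - yv (p i'))" using sa[OF ii] a1 by simp
  have "\<bar>sgm (p i) \<bullet> (yv (p i') - ys)\<bar> \<le> norm (sgm (p i)) * norm (yv (p i') - ys)" by (rule Cauchy_Schwarz_ineq2)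
  also have "\<dots> \<le> norm (sgm (p i)) * (\<eta> / (4 * (norm (sgm (p i)) + 1)))"
    using n2 unfolding \<epsilon>2_def by (intro mult_left_mono) auto
  also have "\<dots> < \<eta> / 4"
  proof -
    have "norm (sgm (p i)) * (\<eta> / (4 * (norm (sgm (p i)) + 1))) = (\<eta> / 4) * (norm (sgm (p i)) / (norm (sgm (p i)) + 1))"
      by (simp add: field_simps)
    also have "\<dots> < (\<eta> / 4) * 1"
    proof -
      have fr: "norm (sgm (p i)) / (norm (sgm (p i)) + 1) < 1"
      proof -
        have "0 < norm (sgm (p i)) + 1" using norm_ge_zero[of "sgm (p i)"] by linarith
        then show ?thesis by (simp add: divide_less_eq)
      qed
      show ?thesis using eta fr by (intro mult_strict_left_mono) auto
    qed
    finally show ?thesis by simp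
  qed
  finally have a3: "\<bar>sgm (p i) \<bullet> (yv (p i') - ys)\<bar> < \<eta> / 4" .
  have a4: "\<eta> / 4 < sgm (p i) \<bullet> (yv (p i) - ys)"
  proof -
    have "sgm (p i) \<bullet> (yv (p i) - ys) = sgm (p i) \<bullet> (yv (p i) - yv (p i')) + sgm (p i) \<bullet> (yv (p i') - ys)"
      by (simp add: inner_diff_right)
    then show ?thesis using a2 a3 by linarith
  qed
  define Wp where "Wp = Ys + T *\<^sub>R (YS (p i) (d - 1) - Ys)"
  have "norm (T *\<^sub>R (YS (p i) (d - 1) - Ys)) = T * norm (YS (p i) (d - 1) - Ys)" using T by simp
  also have "\<dots> < T * (\<rho> / T)" using i T unfolding \<epsilon>1_def by (intro mult_strict_left_mono) auto
  also have "\<dots> = \<rho>" using T by simp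
  finally have "Wp \<in> Yset P (d - 1)" using rho(2) Yin[of "r i"] T unfolding Wp_def p_def by simp
  then have zK: "Wp $ \<omega> \<in> Kset P (d - 1)" unfolding Kset_def by blast
  have zeq: "Wp $ \<omega> - yv (p i) = (T - 1) *\<^sub>R (yv (p i) - ys)"
    unfolding Wp_def yv_def ys_def by (simp add: algebra_simps)
  have "sgm (p i) \<bullet> (Wp $ \<omega> - yv (p i)) = (T - 1) * (sgm (p i) \<bullet> (yv (p i) - ys))"
    unfolding zeq by simp
  also have "\<dots> > (T - 1) * (\<eta> / 4)" using a4 T by (intro mult_strict_left_mono) auto
  finally have big: "(T - 1) * (\<eta> / 4) < sgm (p i) \<bullet> (Wp $ \<omega> - yv (p i))" .
  have "(T - 1) * (\<eta> / 4) = \<eta> / 4 + \<bar>R\<bar>" unfolding T_def using eta by (simp add: field_simps)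
  then have "R < sgm (p i) \<bullet> (Wp $ \<omega> - yv (p i))" using big eta by linarith
  with sb[OF zK, of i] show False by simp
qed

end
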